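(* Let $D\ge 3$ be an integer and let $\mathcal{M}$ be a connected ciliated $D$-edge-colored map (as defined in the context) with $V(\mathcal{M})$ vertices and $E(\mathcal{M})$ edges. Let $F_{\mathrm{int}}(\mathcal{M})=\sum_{c=1}^D F^c_{\mathrm{int}}(\mathcal{M})$ be its total number of internal faces, let $\mathcal{B}=\partial\mathcal{M}$ be its boundary graph, let $p(\mathcal{B})$ be the number of cilia of $\mathcal{M}$ (equivalently the number of black vertices of $\mathcal{B}$), and let $\rho(\mathcal{B})$ be the number of connected components of $\mathcal{B}$ (with $\rho(\mathcal{B})=0$ if $\mathcal{M}$ has no cilium). Then $$-(D-1)\,E(\mathcal{M}) + F_{\mathrm{int}}(\mathcal{M}) \;\le\; D - (D-1)\,p(\mathcal{B}) - \rho(\mathcal{B}) - (D-2)\bigl[E(\mathcal{M}) - V(\mathcal{M}) + 1\bigr].$$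
   Context: A ciliated $D$-edge-colored map is a finite connected combinatorial map (a graph, loops and multiple edges allowed, together with a cyclic clockwise ordering of the half-edges around each vertex) in which every edge carries a color in $\{1,\dots,D\}$, and in which some vertices (each at most once) carry a marker called a cilium. A corner is the portion of a vertex between two consecutive half-edges in the cyclic order (an isolated vertex without edges has a single corner); a cilium is placed inside a corner and splits it into two corners, so the map has $2E(\mathcal{M})+p$ corners where $p$ is the number of cilia. For a color $c$, $\mathcal{M}_c$ denotes the submap obtained by deleting all edges of colors different from $c$ (all vertices, cilia and their positions are kept, with the induced cyclic orders). The faces of color $c$ of $\mathcal{M}$ are the faces of $\mathcal{M}_c$, traversed clockwise by alternately following corners and edges of color $c$; a face is internal if it is a closed cycle that never meets a cilium, and external if it is an open path that starts right after one cilium (the source) and ends when it reaches a cilium (the target), possibly the same one. Thus there are exactly $p$ external faces of each color. $F^c_{\mathrm{int}}(\mathcal{M})$ is the number of internal faces of color $c$. The boundary graph $\partial\mathcal{M}$ is the bipartite $D$-edge-colored graph having one white and one black vertex for each cilium, and, for each external face of color $c$ going from source cilium $i$ to target cilium $j$, an edge of color $c$ joining the white vertex of $i$ to the black vertex of $j$; it is $D$-regular with $p$ black vertices. *)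

theory Defs
  imports Main
begin

text \<open>
  Items of type 'a are half-edges (set cm_half) and cilia (set cm_cilia).
  cm_rot is the clockwise successor permutation of the items around each vertex;
  the items at a vertex form exactly one cycle of cm_rot, and cm_vx gives the vertex
  of an item.  Vertices (set cm_verts) carrying no item are isolated uncilated vertices.
  cm_inv is the fixed-point-free involution on half-edges pairing them into edges,
  cm_col gives the colour of a half-edge (constant on edges).
\<close>

record ('a, 'v) cmap =
  cm_half  :: "'a set"
  cm_cilia :: "'a set"
  cm_verts :: "'v set"
  cm_vx    :: "'a \<Rightarrow> 'v"
  cm_rot   :: "'a \<Rightarrow> 'a"
  cm_inv   :: "'a \<Rightarrow> 'a"
  cm_col   :: "'a \<Rightarrow> nat"

definition cm_items :: "('a, 'v) cmap \<Rightarrow> 'a set" where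
  "cm_items M = cm_half M \<union> cm_cilia M"

definition cmap_edge_rel :: "('a, 'v) cmap \<Rightarrow> ('v \<times> 'v) set" where
  "cmap_edge_rel M = {(cm_vx M h, cm_vx M (cm_inv M h)) | h. h \<in> cm_half M}"

definition ciliated_map :: "nat \<Rightarrow> ('a, 'v) cmap \<Rightarrow> bool" where
  "ciliated_map D M \<longleftrightarrow>
     finite (cm_half M) \<and> finite (cm_cilia M) \<and> finite (cm_verts M) \<and>
     cm_half M \<inter> cm_cilia M = {} \<and>
     (\<forall>x \<in> cm_items M. cm_vx M x \<in> cm_verts M) \<and>
     bij_betw (cm_rot M) (cm_items M) (cm_items M) \<and>
     (\<forall>x \<in> cm_items M. \<forall>y \<in> cm_items M.
         cm_vx M x = cm_vx M y \<longleftrightarrow> (\<exists>n. (cm_rot M ^^ n) x = y)) \<and>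
     (\<forall>x \<in> cm_cilia M. \<forall>y \<in> cm_cilia M. cm_vx M x = cm_vx M y \<longrightarrow> x = y) \<and>
     (\<forall>h \<in> cm_half M. cm_inv M h \<in> cm_half M \<and> cm_inv M h \<noteq> h \<and>
         cm_inv M (cm_inv M h) = h) \<and>
     (\<forall>h \<in> cm_half M. cm_col M h \<in> {1..D} \<and> cm_col M (cm_inv M h) = cm_col M h)"

definition connected_cmap :: "('a, 'v) cmap \<Rightarrow> bool" where
  "connected_cmap M \<longleftrightarrow> cm_verts M \<noteq> {} \<and>
     (\<forall>u \<in> cm_verts M. \<forall>v \<in> cm_verts M. (u, v) \<in> (cmap_edge_rel M)\<^sup>*)"

definition nV :: "('a, 'v) cmap \<Rightarrow> nat" where "nV M = card (cm_verts M)"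
definition nE :: "('a, 'v) cmap \<Rightarrow> nat" where "nE M = card (cm_half M) div 2"
definition nP :: "('a, 'v) cmap \<Rightarrow> nat" where "nP M = card (cm_cilia M)"

text \<open>Half-edges of colour c, and the rotation of the submap M_c (restricted to
  half-edges of colour c and cilia).\<close>
definition half_col :: "('a, 'v) cmap \<Rightarrow> nat \<Rightarrow> 'a set" where
  "half_col M c = {h \<in> cm_half M. cm_col M h = c}"

definition rot_col :: "('a, 'v) cmap \<Rightarrow> nat \<Rightarrow> 'a \<Rightarrow> 'a" where
  "rot_col M c x =
     (cm_rot M ^^ (LEAST k. 0 < k \<and> (cm_rot M ^^ k) x \<in> half_col M c \<union> cm_cilia M)) x"

text \<open>Face step of colour c: from a half-edge h (arriving at the vertex of the opposite
  half-edge) go to the next item clockwise in M_c; from a cilium go to the next item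
  clockwise in M_c.  Faces of colour c are the orbits of this map on the half-edges
  of colour c and the cilia; internal faces are the orbits meeting no cilium.\<close>
definition face_step :: "('a, 'v) cmap \<Rightarrow> nat \<Rightarrow> 'a \<Rightarrow> 'a" where
  "face_step M c x = rot_col M c (if x \<in> cm_cilia M then x else cm_inv M x)"

definition face_orbit :: "('a, 'v) cmap \<Rightarrow> nat \<Rightarrow> 'a \<Rightarrow> 'a set" where
  "face_orbit M c x = {(face_step M c ^^ n) x | n. True}"

text \<open>Vertices with no half-edge of colour c and no cilium: isolated in M_c, each
  forming a single (internal) face of colour c.\<close>
definition isolated_col :: "('a, 'v) cmap \<Rightarrow> nat \<Rightarrow> 'v set" where
  "isolated_col M c = {v \<in> cm_verts M. \<not> (\<exists>x \<in> half_col M c \<union> cm_cilia M. cm_vx M x = v)}"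

definition F_int_col :: "('a, 'v) cmap \<Rightarrow> nat \<Rightarrow> nat" where
  "F_int_col M c =
     card {face_orbit M c h | h. h \<in> half_col M c \<and> face_orbit M c h \<inter> cm_cilia M = {}}
     + card (isolated_col M c)"

definition F_int :: "nat \<Rightarrow> ('a, 'v) cmap \<Rightarrow> nat" where
  "F_int D M = (\<Sum>c = 1..D. F_int_col M c)"

text \<open>Target cilium of the external face of colour c whose source is cilium i.\<close>
definition face_target :: "('a, 'v) cmap \<Rightarrow> nat \<Rightarrow> 'a \<Rightarrow> 'a" where
  "face_target M c i =
     (face_step M c ^^ (LEAST k. 0 < k \<and> (face_step M c ^^ k) i \<in> cm_cilia M)) i"

text \<open>Boundary graph: white vertices Inl i, black vertices Inr i (i a cilium); an edge of
  colour c joins Inl i and Inr (face_target M c i).  Only connectivity matters here.\<close>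
definition bdry_verts :: "('a, 'v) cmap \<Rightarrow> ('a + 'a) set" where
  "bdry_verts M = Inl ` cm_cilia M \<union> Inr ` cm_cilia M"

definition bdry_adj :: "nat \<Rightarrow> ('a, 'v) cmap \<Rightarrow> (('a + 'a) \<times> ('a + 'a)) set" where
  "bdry_adj D M = {(Inl i, Inr (face_target M c i)) | i c. i \<in> cm_cilia M \<and> c \<in> {1..D}}
                \<union> {(Inr (face_target M c i), Inl i) | i c. i \<in> cm_cilia M \<and> c \<in> {1..D}}"

definition bdry_components :: "nat \<Rightarrow> ('a, 'v) cmap \<Rightarrow> nat" where
  "bdry_components D M = card (bdry_verts M // ((bdry_adj D M)\<^sup>* \<inter> (bdry_verts M \<times> bdry_verts M)))"

end

theory Submission
  imports Defs
begin


section \<open>Generic facts on iteration, first return maps and orbits\<close>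

lemma funpow_in_set:
  assumes "\<And>y. y \<in> A \<Longrightarrow> f y \<in> A" "x \<in> A"
  shows "(f ^^ n) x \<in> A"
  using assms by (induction n) auto

lemma funpow_diff:
  assumes "m \<le> n" shows "(f ^^ m) ((f ^^ (n - m)) x) = (f ^^ n) x"
proof -
  have "(f ^^ (m + (n - m))) x = (f ^^ m) ((f ^^ (n - m)) x)" by (simp add: funpow_add)
  then show ?thesis using assms by simp
qed

lemma funpow_diff2:
  assumes "m \<le> n" shows "(f ^^ (n - m)) ((f ^^ m) x) = (f ^^ n) x"
proof -
  have "(f ^^ ((n - m) + m)) x = (f ^^ (n - m)) ((f ^^ m) x)" by (simp add: funpow_add)
  then show ?thesis using assms by simp
qed

lemma funpow_cong_on:
  assumes "\<And>y. y \<in> A \<Longrightarrow> f y \<in> A" "\<And>y. y \<in> A \<Longrightarrow> f y = g y" "x \<in> A"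
  shows "(f ^^ n) x = (g ^^ n) x"
proof (induction n)
  case (Suc n)
  have "(f ^^ n) x \<in> A" using funpow_in_set[OF assms(1,3)] .
  then show ?case using Suc assms(2) by simp
qed simp

lemma perm_period:
  assumes "bij_betw f A A" "finite A" "x \<in> A"
  shows "\<exists>n>0. (f ^^ n) x = x"
proof -
  have into: "\<And>y. y \<in> A \<Longrightarrow> f y \<in> A" using assms(1) bij_betwE by blast
  let ?g = "\<lambda>n. (f ^^ n) x"
  have "?g ` {..card A} \<subseteq> A" using funpow_in_set[OF into assms(3)] by auto
  then have "card (?g ` {..card A}) \<le> card A" using assms(2) card_mono by blast
  then have "card (?g ` {..card A}) < card {..card A}" by simp
  then have "\<not> inj_on ?g {..card A}" by (rule pigeonhole)
  then obtain i j where ij: "i \<le> card A" "j \<le> card A" "i \<noteq> j" "?g i = ?g j"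
    unfolding inj_on_def by auto
  define i' j' where "i' = min i j" and "j' = max i j"
  have lt: "i' < j'" and eq: "?g i' = ?g j'" using ij by (auto simp: i'_def j'_def min_def max_def)
  have "(f ^^ i') ((f ^^ (j' - i')) x) = (f ^^ (i' + (j' - i'))) x"
    by (simp add: funpow_add)
  also have "\<dots> = (f ^^ j') x" using lt by simp
  also have "\<dots> = (f ^^ i') x" using eq by simp
  finally have "(f ^^ i') ((f ^^ (j' - i')) x) = (f ^^ i') x" .
  moreover have "inj_on (f ^^ i') A" using bij_betw_funpow[OF assms(1)] bij_betw_def by blast
  moreover have "(f ^^ (j' - i')) x \<in> A" using funpow_in_set[OF into assms(3)] .
  ultimately have "(f ^^ (j' - i')) x = x" using assms(3) by (auto dest: inj_onD)
  then show ?thesis using lt by (intro exI[of _ "j' - i'"]) auto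
qed

definition ind :: "('a \<Rightarrow> 'a) \<Rightarrow> 'a set \<Rightarrow> 'a \<Rightarrow> 'a" where
  "ind f Y x = (f ^^ (LEAST k. 0 < k \<and> (f ^^ k) x \<in> Y)) x"

definition ret :: "('a \<Rightarrow> 'a) \<Rightarrow> 'a set \<Rightarrow> 'a \<Rightarrow> nat" where
  "ret f Y x = (LEAST k. 0 < k \<and> (f ^^ k) x \<in> Y)"

lemma ind_ret: "ind f Y x = (f ^^ ret f Y x) x"
  by (simp add: ind_def ret_def)

lemma ret_props:
  assumes "\<exists>k>0. (f ^^ k) x \<in> Y"
  shows "0 < ret f Y x" "(f ^^ ret f Y x) x \<in> Y" "\<And>j. 0 < j \<Longrightarrow> j < ret f Y x \<Longrightarrow> (f ^^ j) x \<notin> Y"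
proof -
  have "0 < ret f Y x \<and> (f ^^ ret f Y x) x \<in> Y"
    unfolding ret_def by (rule LeastI_ex[where P="\<lambda>k. 0 < k \<and> (f ^^ k) x \<in> Y"]) (use assms in auto)
  then show "0 < ret f Y x" "(f ^^ ret f Y x) x \<in> Y" by auto
  fix j assume j: "0 < j" "j < ret f Y x"
  have "\<not> (0 < j \<and> (f ^^ j) x \<in> Y)" using j(2) unfolding ret_def by (rule not_less_Least)
  then show "(f ^^ j) x \<notin> Y" using j(1) by simp
qed

lemma ret_le:
  assumes "0 < k" "(f ^^ k) x \<in> Y"
  shows "ret f Y x \<le> k"
proof -
  have "0 < k \<and> (f ^^ k) x \<in> Y" using assms by simp
  then show ?thesis unfolding ret_def by (rule Least_le[of "\<lambda>k. 0 < k \<and> (f ^^ k) x \<in> Y" k])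
qed

lemma ret_exists:
  assumes "bij_betw f A A" "finite A" "x \<in> Y" "Y \<subseteq> A"
  shows "\<exists>k>0. (f ^^ k) x \<in> Y"
proof -
  obtain n where "0 < n" "(f ^^ n) x = x" using perm_period[OF assms(1,2)] assms(3,4) by auto
  then show ?thesis using assms(3) by auto
qed

lemma ind_in:
  assumes "\<exists>k>0. (f ^^ k) x \<in> Y"
  shows "ind f Y x \<in> Y"
  using ret_props[OF assms] by (simp add: ind_ret)

lemma ind_step:
  assumes "\<exists>k>0. (f ^^ k) x \<in> Y" "f x \<notin> Y"
  shows "ind f Y (f x) = ind f Y x"
proof -
  have r: "0 < ret f Y x" "(f ^^ ret f Y x) x \<in> Y" using ret_props[OF assms(1)] by auto
  have r1: "ret f Y x \<noteq> 1"
  proof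
    assume "ret f Y x = 1" then show False using r(2) assms(2) by simp
  qed
  then have r2: "1 < ret f Y x" using r by linarith
  define m where "m = ret f Y x - 1"
  have m: "0 < m" "Suc m = ret f Y x" using r2 by (auto simp: m_def)
  have "(f ^^ Suc m) x = (f ^^ m) (f x)" by (simp only: funpow_Suc_right comp_apply)
  then have fm: "(f ^^ m) (f x) = (f ^^ ret f Y x) x" using m(2) by simp
  have ex: "\<exists>k>0. (f ^^ k) (f x) \<in> Y" using fm r m by auto
  have "ret f Y (f x) = m"
  proof (rule antisym)
    show "ret f Y (f x) \<le> m" using ret_le[of m f "f x" Y] fm r m by auto
    show "m \<le> ret f Y (f x)"
    proof (rule ccontr)
      assume "\<not> m \<le> ret f Y (f x)"
      then have lt: "Suc (ret f Y (f x)) < ret f Y x" using m by simp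
      have "(f ^^ Suc (ret f Y (f x))) x = (f ^^ (ret f Y (f x))) (f x)" by (simp only: funpow_Suc_right comp_apply)
      then have "(f ^^ Suc (ret f Y (f x))) x \<in> Y"
        using ret_props(2)[OF ex] by simp
      then show False using ret_props(3)[OF assms(1) _ lt] by simp
    qed
  qed
  then show ?thesis using fm by (simp add: ind_ret)
qed

lemma ind_in_orbit_set:
  assumes "\<And>y. y \<in> A \<Longrightarrow> f y \<in> A" "x \<in> A"
  shows "ind f Y x \<in> A"
  unfolding ind_def using funpow_in_set[OF assms] .

lemma ind_cong:
  assumes "\<And>y. y \<in> A \<Longrightarrow> f y \<in> A" "\<And>y. y \<in> A \<Longrightarrow> f y = g y" "x \<in> A"
  shows "ind f Y x = ind g Y x"
proof -
  have "\<And>k. (f ^^ k) x = (g ^^ k) x" using funpow_cong_on[OF assms] .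
  then show ?thesis unfolding ind_def by simp
qed

lemma ind_inj:
  assumes "bij_betw f A A" "finite A" "Y \<subseteq> A"
  shows "inj_on (ind f Y) Y"
proof (rule inj_onI)
  fix x y assume xy: "x \<in> Y" "y \<in> Y" "ind f Y x = ind f Y y"
  have into: "\<And>z. z \<in> A \<Longrightarrow> f z \<in> A" using assms(1) bij_betwE by blast
  have ex: "\<exists>k>0. (f ^^ k) x \<in> Y" "\<exists>k>0. (f ^^ k) y \<in> Y"
    using ret_exists[OF assms(1,2) _ assms(3)] xy by auto
  have injk: "\<And>k. inj_on (f ^^ k) A" using bij_betw_funpow[OF assms(1)] bij_betw_def by blast
  have xA: "x \<in> A" "y \<in> A" using xy assms(3) by auto
  show "x = y"
  proof (cases "ret f Y x" "ret f Y y" rule: linorder_cases)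
    case less
    define d where "d = ret f Y y - ret f Y x"
    have "(f ^^ ret f Y x) ((f ^^ d) y) = (f ^^ ret f Y y) y"
      using less by (simp add: d_def funpow_diff)
    also have "\<dots> = (f ^^ ret f Y x) x" using xy(3) by (simp add: ind_ret)
    finally have "(f ^^ d) y = x"
      using injk xA funpow_in_set[OF into xA(2)] by (meson inj_onD)
    moreover have "0 < d" "d < ret f Y y" using less ret_props(1)[OF ex(1)] by (auto simp: d_def)
    ultimately show ?thesis using ret_props(3)[OF ex(2)] xy(1) by blast
  next
    case equal
    then have "(f ^^ ret f Y x) x = (f ^^ ret f Y x) y" using xy(3) by (simp add: ind_ret)
    then show ?thesis using injk xA by (meson inj_onD)
  next
    case greater
    define d where "d = ret f Y x - ret f Y y"
    have "(f ^^ ret f Y y) ((f ^^ d) x) = (f ^^ ret f Y x) x"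
      using greater by (simp add: d_def funpow_diff)
    also have "\<dots> = (f ^^ ret f Y y) y" using xy(3) by (simp add: ind_ret)
    finally have "(f ^^ d) x = y"
      using injk xA funpow_in_set[OF into xA(1)] by (meson inj_onD)
    moreover have "0 < d" "d < ret f Y x" using greater ret_props(1)[OF ex(2)] by (auto simp: d_def)
    ultimately show ?thesis using ret_props(3)[OF ex(1)] xy(2) by blast
  qed
qed

lemma ind_maps:
  assumes "bij_betw f A A" "finite A" "Y \<subseteq> A" "x \<in> Y"
  shows "ind f Y x \<in> Y"
  by (rule ind_in[OF ret_exists[OF assms(1,2,4,3)]])

lemma ind_bij:
  assumes "bij_betw f A A" "finite A" "Y \<subseteq> A"
  shows "bij_betw (ind f Y) Y Y"
proof -
  have s: "ind f Y ` Y \<subseteq> Y" using ind_maps[OF assms] by auto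
  have i: "inj_on (ind f Y) Y" using ind_inj[OF assms] .
  have "finite Y" using assms(2,3) finite_subset by blast
  then have "ind f Y ` Y = Y" using endo_inj_surj s i by blast
  then show ?thesis using i by (simp add: bij_betw_def)
qed

definition orb :: "('a \<Rightarrow> 'a) \<Rightarrow> 'a \<Rightarrow> 'a set" where
  "orb f x = {(f ^^ n) x | n. True}"

lemma orb_self: "x \<in> orb f x"
  unfolding orb_def by (auto intro: exI[of _ 0])

lemma orb_step: "f x \<in> orb f x"
  unfolding orb_def by (auto intro: exI[of _ 1])

lemma orb_trans:
  assumes "y \<in> orb f x" "z \<in> orb f y" shows "z \<in> orb f x"
proof -
  obtain n where n: "y = (f ^^ n) x" using assms(1) unfolding orb_def by auto
  obtain m where m: "z = (f ^^ m) y" using assms(2) unfolding orb_def by auto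
  have "z = (f ^^ (m + n)) x" using n m by (simp add: funpow_add)
  then show ?thesis unfolding orb_def by blast
qed

lemma orb_f: "orb f (f x) \<subseteq> orb f x"
  using orb_step orb_trans by fast

lemma orb_subset:
  assumes "\<And>y. y \<in> A \<Longrightarrow> f y \<in> A" "x \<in> A"
  shows "orb f x \<subseteq> A"
  unfolding orb_def using funpow_in_set[OF assms] by auto

lemma funpow_period_mult:
  assumes "(f ^^ n) x = x" shows "(f ^^ (n * k)) x = x"
proof (induction k)
  case (Suc k)
  have "(f ^^ (n * Suc k)) x = (f ^^ n) ((f ^^ (n * k)) x)"
    by (simp add: funpow_add mult_Suc_right)
  then show ?case using Suc assms by simp
qed simp

lemma orb_sym:
  assumes "bij_betw f A A" "finite A" "x \<in> A" "y \<in> orb f x"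
  shows "x \<in> orb f y"
proof -
  obtain n where n: "0 < n" "(f ^^ n) x = x" using perm_period[OF assms(1-3)] by blast
  obtain m where m: "y = (f ^^ m) x" using assms(4) unfolding orb_def by auto
  have "1 * Suc m \<le> n * Suc m" using n(1) by (intro mult_right_mono) auto
  then have le: "m \<le> n * Suc m" by simp
  have "(f ^^ (n * Suc m - m)) y = (f ^^ (n * Suc m - m + m)) x"
    using m by (simp add: funpow_add)
  also have "\<dots> = x" using le funpow_period_mult[OF n(2), of "Suc m"] by simp
  finally show ?thesis unfolding orb_def by blast
qed

lemma orb_eq:
  assumes "bij_betw f A A" "finite A" "x \<in> A" "y \<in> orb f x"
  shows "orb f y = orb f x"
proof
  have "x \<in> orb f y" by (rule orb_sym[OF assms])
  show "orb f y \<subseteq> orb f x" using orb_trans[OF assms(4)] by auto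
  show "orb f x \<subseteq> orb f y" using orb_trans[OF \<open>x \<in> orb f y\<close>] by auto
qed

lemma ind_orb:
  assumes "bij_betw f A A" "finite A" "Y \<subseteq> A" "x \<in> Y"
  shows "orb (ind f Y) x = orb f x \<inter> Y"
proof
  have into: "\<And>z. z \<in> Y \<Longrightarrow> ind f Y z \<in> Y" using ind_maps[OF assms(1,2,3)] by simp
  show "orb (ind f Y) x \<subseteq> orb f x \<inter> Y"
  proof
    fix z assume "z \<in> orb (ind f Y) x"
    then obtain n where z: "z = (ind f Y ^^ n) x" unfolding orb_def by auto
    have "(ind f Y ^^ n) x \<in> orb f x \<inter> Y"
    proof (induction n)
      case 0 then show ?case using assms(4) orb_self[of x f] by simp
    next
      case (Suc n)
      define w where "w = (ind f Y ^^ n) x"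
      have w: "w \<in> orb f x" "w \<in> Y" using Suc w_def by auto
      have "ind f Y w \<in> orb f w" unfolding ind_def orb_def by auto
      then have "ind f Y w \<in> orb f x" using orb_trans[OF w(1)] by simp
      moreover have "ind f Y w \<in> Y" using into w(2) by simp
      ultimately show ?case using w_def by simp
    qed
    then show "z \<in> orb f x \<inter> Y" using z by simp
  qed
  show "orb f x \<inter> Y \<subseteq> orb (ind f Y) x"
  proof
    fix z assume "z \<in> orb f x \<inter> Y"
    then obtain m where m: "z = (f ^^ m) x" "z \<in> Y" unfolding orb_def by auto
    have "\<And>x. x \<in> Y \<Longrightarrow> (f ^^ m) x \<in> Y \<Longrightarrow> (f ^^ m) x \<in> orb (ind f Y) x"
    proof (induction m rule: less_induct)
      case (less m)
      show ?case
      proof (cases "m = 0")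
        case True then show ?thesis using orb_self by simp
      next
        case False
        have ex: "\<exists>k>0. (f ^^ k) x \<in> Y" using ret_exists[OF assms(1,2) less(2) assms(3)] .
        have rle: "ret f Y x \<le> m" using ret_le[of m f x Y] False less(3) by simp
        have rpos: "0 < ret f Y x" using ret_props(1)[OF ex] .
        define x' where "x' = ind f Y x"
        have x'Y: "x' \<in> Y" using into less(2) x'_def by simp
        have eq: "(f ^^ (m - ret f Y x)) x' = (f ^^ m) x"
          using rle by (simp add: x'_def ind_ret funpow_diff2)
        have "(f ^^ (m - ret f Y x)) x' \<in> orb (ind f Y) x'"
          using less(1)[of "m - ret f Y x" x'] rpos rle x'Y eq less(3) False by simp
        moreover have "x' \<in> orb (ind f Y) x" unfolding x'_def by (rule orb_step)
        ultimately have "(f ^^ (m - ret f Y x)) x' \<in> orb (ind f Y) x" using orb_trans[of x' "ind f Y" x] by simp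
        then show ?thesis using eq by simp
      qed
    qed
    then show "z \<in> orb (ind f Y) x" using m assms(4) by simp
  qed
qed




section \<open>Counting connected components\<close>

definition cc :: "'n set \<Rightarrow> ('n \<times> 'n) set \<Rightarrow> nat" where
  "cc N R = card (N // (R\<^sup>* \<inter> N \<times> N))"

lemma equiv_cl:
  assumes "sym R" shows "equiv N (R\<^sup>* \<inter> N \<times> N)"
proof (rule equivI)
  show "refl_on N (R\<^sup>* \<inter> N \<times> N)" by (rule refl_onI) auto
  show "sym (R\<^sup>* \<inter> N \<times> N)" using sym_rtrancl[OF assms] by (auto simp: sym_def)
  show "trans (R\<^sup>* \<inter> N \<times> N)" by (auto simp: trans_def)
qed auto

lemma rtr_sym: "sym R \<Longrightarrow> (x, y) \<in> R\<^sup>* \<Longrightarrow> (y, x) \<in> R\<^sup>*"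
  using sym_rtrancl by (metis symD)

lemma cc_mono:
  assumes "sym R" "sym R'" "R \<subseteq> R'" "finite N"
  shows "cc N R' \<le> cc N R"
proof -
  let ?r = "R\<^sup>* \<inter> N \<times> N" and ?r' = "R'\<^sup>* \<inter> N \<times> N"
  define F where "F Q = ?r' `` Q" for Q
  have sub: "R\<^sup>* \<subseteq> R'\<^sup>*" using assms(3) rtrancl_mono by blast
  have "F ` (N // ?r) = N // ?r'"
  proof
    show "F ` (N // ?r) \<subseteq> N // ?r'"
    proof
      fix Q assume "Q \<in> F ` (N // ?r)"
      then obtain x where x: "x \<in> N" "Q = F (?r `` {x})" by (auto simp: quotient_def)
      have "F (?r `` {x}) = ?r' `` {x}"
      proof
        show "F (?r `` {x}) \<subseteq> ?r' `` {x}"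
        proof
          fix z assume "z \<in> F (?r `` {x})"
          then obtain y where y: "(x, y) \<in> R\<^sup>*" "y \<in> N" "(y, z) \<in> R'\<^sup>*" "z \<in> N" by (auto simp: F_def)
          have "(x, y) \<in> R'\<^sup>*" using y(1) sub by blast
          then have "(x, z) \<in> R'\<^sup>*" using y(3) by (rule rtrancl_trans)
          then show "z \<in> ?r' `` {x}" using x(1) y(4) by auto
        qed
        show "?r' `` {x} \<subseteq> F (?r `` {x})" using x(1) by (auto simp: F_def)
      qed
      then show "Q \<in> N // ?r'" using x by (auto simp: quotient_def)
    qed
    show "N // ?r' \<subseteq> F ` (N // ?r)"
    proof
      fix Q assume "Q \<in> N // ?r'"
      then obtain x where x: "x \<in> N" "Q = ?r' `` {x}" by (auto simp: quotient_def)
      have "F (?r `` {x}) = ?r' `` {x}"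
      proof
        show "F (?r `` {x}) \<subseteq> ?r' `` {x}"
        proof
          fix z assume "z \<in> F (?r `` {x})"
          then obtain y where y: "(x, y) \<in> R\<^sup>*" "y \<in> N" "(y, z) \<in> R'\<^sup>*" "z \<in> N" by (auto simp: F_def)
          have "(x, y) \<in> R'\<^sup>*" using y(1) sub by blast
          then have "(x, z) \<in> R'\<^sup>*" using y(3) by (rule rtrancl_trans)
          then show "z \<in> ?r' `` {x}" using x(1) y(4) by auto
        qed
        show "?r' `` {x} \<subseteq> F (?r `` {x})" using x(1) by (auto simp: F_def)
      qed
      then show "Q \<in> F ` (N // ?r)" using x by (auto simp: quotient_def)
    qed
  qed
  moreover have "finite (N // ?r)" using assms(4) finite_quotient equiv_cl[OF assms(1)] by blast
  ultimately have "card (N // ?r') \<le> card (N // ?r)" using card_image_le by metis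
  then show ?thesis by (simp add: cc_def)
qed

lemma cc_same:
  assumes "R\<^sup>* = R'\<^sup>*" shows "cc N R = cc N R'"
  using assms by (simp add: cc_def)

lemma rtr_add_char:
  assumes "sym R'" "(x, y) \<in> (R' \<union> {(u, w), (w, u)})\<^sup>*"
  shows "(x, y) \<in> R'\<^sup>* \<or> ((x, u) \<in> R'\<^sup>* \<and> (w, y) \<in> R'\<^sup>*) \<or> ((x, w) \<in> R'\<^sup>* \<and> (u, y) \<in> R'\<^sup>*)"
  using assms(2)
proof (induction rule: rtrancl_induct)
  case base then show ?case by simp
next
  case (step y z)
  let ?S = "R'\<^sup>*"
  from step.hyps(2) consider "(y, z) \<in> R'" | "y = u" "z = w" | "y = w" "z = u" by blast
  then show ?case
  proof cases
    case 1
    then have yz: "(y, z) \<in> ?S" by simp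
    from step.IH show ?thesis
    proof (elim disjE conjE)
      assume "(x, y) \<in> ?S" then show ?thesis using yz rtrancl_trans[of x y R' z] by simp
    next
      assume "(x, u) \<in> ?S" "(w, y) \<in> ?S" then show ?thesis using yz rtrancl_trans[of w y R' z] by simp
    next
      assume "(x, w) \<in> ?S" "(u, y) \<in> ?S" then show ?thesis using yz rtrancl_trans[of u y R' z] by simp
    qed
  next
    case 2
    from step.IH show ?thesis
    proof (elim disjE conjE)
      assume "(x, y) \<in> ?S" then show ?thesis using 2 by simp
    next
      assume a: "(x, u) \<in> ?S" "(w, y) \<in> ?S"
      then have "(u, w) \<in> ?S" using 2 rtr_sym[OF assms(1)] by simp
      then have "(x, w) \<in> ?S" using a(1) rtrancl_trans[of x u R' w] by simp
      then show ?thesis using 2 by simp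
    next
      assume a: "(x, w) \<in> ?S" "(u, y) \<in> ?S"
      then show ?thesis using 2 by simp
    qed
  next
    case 3
    from step.IH show ?thesis
    proof (elim disjE conjE)
      assume "(x, y) \<in> ?S" then show ?thesis using 3 by simp
    next
      assume a: "(x, u) \<in> ?S" "(w, y) \<in> ?S"
      then show ?thesis using 3 by simp
    next
      assume a: "(x, w) \<in> ?S" "(u, y) \<in> ?S"
      then have "(w, u) \<in> ?S" using 3 rtr_sym[OF assms(1)] by simp
      then have "(x, u) \<in> ?S" using a(1) rtrancl_trans[of x w R' u] by simp
      then show ?thesis using 3 by simp
    qed
  qed
qed

lemma cc_add_conn:
  assumes "sym R'" "(u, w) \<in> R'\<^sup>*"
  shows "cc N (R' \<union> {(u, w), (w, u)}) = cc N R'"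
proof (rule cc_same)
  have wu: "(w, u) \<in> R'\<^sup>*" using rtr_sym[OF assms] .
  have "R' \<union> {(u, w), (w, u)} \<subseteq> R'\<^sup>*" using assms(2) wu by auto
  then have "(R' \<union> {(u, w), (w, u)})\<^sup>* \<subseteq> R'\<^sup>*" by (rule rtrancl_subset_rtrancl)
  moreover have "R'\<^sup>* \<subseteq> (R' \<union> {(u, w), (w, u)})\<^sup>*" by (rule rtrancl_mono) blast
  ultimately show "(R' \<union> {(u, w), (w, u)})\<^sup>* = R'\<^sup>*" by blast
qed

lemma cc_add_disc:
  assumes "sym R'" "(u, w) \<notin> R'\<^sup>*" "u \<in> N" "w \<in> N" "finite N"
  shows "cc N R' = cc N (R' \<union> {(u, w), (w, u)}) + 1"
proof -
  define R where "R = R' \<union> {(u, w), (w, u)}"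
  define S where "S = R'\<^sup>*"
  let ?r = "R\<^sup>* \<inter> N \<times> N" and ?r' = "S \<inter> N \<times> N"
  have symR: "sym R" using assms(1) unfolding R_def sym_def by auto
  have SR: "S \<subseteq> R\<^sup>*" unfolding S_def R_def by (rule rtrancl_mono) blast
  have uwR: "(u, w) \<in> R\<^sup>*" "(w, u) \<in> R\<^sup>*" unfolding R_def by auto
  have char: "\<And>x y. (x, y) \<in> R\<^sup>* \<Longrightarrow> (x, y) \<in> S \<or> ((x, u) \<in> S \<and> (w, y) \<in> S) \<or> ((x, w) \<in> S \<and> (u, y) \<in> S)"
    unfolding R_def S_def using rtr_add_char[OF assms(1)] by blast
  define A where "A = ?r `` {u}"
  define Cu where "Cu = ?r' `` {u}"
  define Cw where "Cw = ?r' `` {w}"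
  define B where "B = (\<lambda>x. ?r' `` {x}) ` (N - A)"
  have eqr: "equiv N ?r" using equiv_cl[OF symR] .
  have eqr': "equiv N ?r'" using equiv_cl[OF assms(1)] unfolding S_def .
  have f1: "?r `` {x} = ?r' `` {x}" if x: "x \<in> N" "x \<notin> A" for x
  proof
    show "?r' `` {x} \<subseteq> ?r `` {x}" using SR by auto
    show "?r `` {x} \<subseteq> ?r' `` {x}"
    proof
      fix y assume y: "y \<in> ?r `` {x}"
      then have xy: "(x, y) \<in> R\<^sup>*" "y \<in> N" by auto
      have "(x, u) \<notin> S"
      proof
        assume "(x, u) \<in> S"
        then have "(u, x) \<in> S" using rtr_sym[OF assms(1)] unfolding S_def by blast
        then have "(u, x) \<in> R\<^sup>*" using SR by blast
        then show False using x assms(3) unfolding A_def by auto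
      qed
      moreover have "(x, w) \<notin> S"
      proof
        assume "(x, w) \<in> S"
        then have "(w, x) \<in> S" using rtr_sym[OF assms(1)] unfolding S_def by blast
        then have "(w, x) \<in> R\<^sup>*" using SR by blast
        then have "(u, x) \<in> R\<^sup>*" using uwR(1) rtrancl_trans[of u w R x] by simp
        then show False using x assms(3) unfolding A_def by auto
      qed
      ultimately have "(x, y) \<in> S" using char[OF xy(1)] by blast
      then show "y \<in> ?r' `` {x}" using x(1) xy(2) by auto
    qed
  qed
  have CuA: "Cu \<subseteq> A" unfolding Cu_def A_def using SR by auto
  have CwA: "Cw \<subseteq> A"
  proof
    fix y assume "y \<in> Cw"
    then have "(w, y) \<in> R\<^sup>*" "y \<in> N" using SR unfolding Cw_def by auto
    then have "(u, y) \<in> R\<^sup>*" using uwR(1) rtrancl_trans[of u w R y] by simp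
    then show "y \<in> A" using \<open>y \<in> N\<close> assms(3) unfolding A_def by auto
  qed
  have selfr': "x \<in> ?r' `` {x}" if "x \<in> N" for x using that unfolding S_def by auto
  have q': "N // ?r' = B \<union> {Cu, Cw}"
  proof
    show "N // ?r' \<subseteq> B \<union> {Cu, Cw}"
    proof
      fix Q assume "Q \<in> N // ?r'"
      then obtain x where x: "x \<in> N" "Q = ?r' `` {x}" by (auto simp: quotient_def)
      show "Q \<in> B \<union> {Cu, Cw}"
      proof (cases "x \<in> A")
        case False then show ?thesis using x unfolding B_def by auto
      next
        case True
        then have ux: "(u, x) \<in> R\<^sup>*" unfolding A_def by auto
        from char[OF ux] have "(u, x) \<in> ?r' \<or> (w, x) \<in> ?r'" using x(1) assms(3,4) by auto
        then show ?thesis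
        proof
          assume "(u, x) \<in> ?r'"
          then have "?r' `` {u} = ?r' `` {x}" using equiv_class_eq[OF eqr'] by blast
          then show ?thesis using x unfolding Cu_def by auto
        next
          assume "(w, x) \<in> ?r'"
          then have "?r' `` {w} = ?r' `` {x}" using equiv_class_eq[OF eqr'] by blast
          then show ?thesis using x unfolding Cw_def by auto
        qed
      qed
    qed
    show "B \<union> {Cu, Cw} \<subseteq> N // ?r'"
      unfolding B_def Cu_def Cw_def using assms(3,4) by (auto simp: quotient_def)
  qed
  have q: "N // ?r = B \<union> {A}"
  proof
    show "N // ?r \<subseteq> B \<union> {A}"
    proof
      fix Q assume "Q \<in> N // ?r"
      then obtain x where x: "x \<in> N" "Q = ?r `` {x}" by (auto simp: quotient_def)
      show "Q \<in> B \<union> {A}"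
      proof (cases "x \<in> A")
        case False then show ?thesis using x f1 unfolding B_def by auto
      next
        case True
        then have "(u, x) \<in> ?r" unfolding A_def by auto
        then have "?r `` {u} = ?r `` {x}" using equiv_class_eq[OF eqr] by blast
        then show ?thesis using x unfolding A_def by auto
      qed
    qed
    show "B \<union> {A} \<subseteq> N // ?r"
    proof
      fix Q assume "Q \<in> B \<union> {A}"
      then show "Q \<in> N // ?r"
      proof
        assume "Q \<in> B"
        then obtain x where "x \<in> N" "x \<notin> A" "Q = ?r' `` {x}" unfolding B_def by auto
        then show ?thesis using f1 by (auto simp: quotient_def)
      next
        assume "Q \<in> {A}" then show ?thesis using assms(3) unfolding A_def by (auto simp: quotient_def)
      qed
    qed
  qed
  have notB: "Q \<notin> B" if "Q \<subseteq> A" for Q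
  proof
    assume "Q \<in> B"
    then obtain x where "x \<in> N" "x \<notin> A" "Q = ?r' `` {x}" unfolding B_def by auto
    then show False using selfr' that by blast
  qed
  have uCu: "u \<in> Cu" using selfr' assms(3) unfolding Cu_def by blast
  have wCw: "w \<in> Cw" using selfr' assms(4) unfolding Cw_def by blast
  have "w \<notin> Cu" using assms(2) unfolding Cu_def S_def by auto
  then have CuCw: "Cu \<noteq> Cw" using wCw by blast
  have finB: "finite B" unfolding B_def using assms(5) by simp
  have "card (N // ?r') = card B + 2"
    using q' notB[OF CuA] notB[OF CwA] CuCw finB by (simp add: card_insert_if)
  moreover have "card (N // ?r) = card B + 1"
    using q notB finB by (simp add: card_insert_if)
  ultimately show ?thesis unfolding cc_def R_def S_def by simp
qed




definition gr :: "'i set \<Rightarrow> ('i \<Rightarrow> 'n) \<Rightarrow> ('i \<Rightarrow> 'n) \<Rightarrow> ('n \<times> 'n) set" where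
  "gr I t h = {(t e, h e) | e. e \<in> I} \<union> {(h e, t e) | e. e \<in> I}"

lemma sym_gr: "sym (gr I t h)" unfolding gr_def sym_def by blast

lemma gr_edge: "e \<in> I \<Longrightarrow> (t e, h e) \<in> gr I t h"
  unfolding gr_def by blast

lemma gr_edge': "e \<in> I \<Longrightarrow> (h e, t e) \<in> gr I t h"
  unfolding gr_def by blast

lemma gr_cases:
  assumes "(a, b) \<in> gr I t h"
  obtains e where "e \<in> I" "a = t e" "b = h e" | e where "e \<in> I" "a = h e" "b = t e"
  using assms unfolding gr_def by blast

definition outn :: "'a set \<Rightarrow> 'a \<Rightarrow> ('a + 'a) + 'a" where
  "outn C x = (if x \<in> C then Inl (Inl x) else Inr x)"
definition innn :: "'a set \<Rightarrow> 'a \<Rightarrow> ('a + 'a) + 'a" where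
  "innn C y = (if y \<in> C then Inl (Inr y) else Inr y)"

lemma rtr_map:
  assumes "\<And>a b. (a, b) \<in> R \<Longrightarrow> (F a, F b) \<in> S\<^sup>*" "(x, y) \<in> R\<^sup>*"
  shows "(F x, F y) \<in> S\<^sup>*"
  using assms(2)
proof (induction rule: rtrancl_induct)
  case (step y z)
  then show ?case using assms(1)[of y z] rtrancl_trans[of "F x" "F y" S "F z"] by simp
qed simp

lemma rtr_closed:
  assumes "\<And>a b. (a, b) \<in> R \<Longrightarrow> a \<in> T \<Longrightarrow> b \<in> T" "(x, y) \<in> R\<^sup>*" "x \<in> T"
  shows "y \<in> T"
  using assms(2,3)
proof (induction rule: rtrancl_induct)
  case (step y z) then show ?case using assms(1) by blast
qed simp

locale sup_setup =
  fixes K :: "nat set" and C :: "'a set" and Z :: "nat \<Rightarrow> 'a set" and \<Phi> :: "nat \<Rightarrow> 'a \<Rightarrow> 'a"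
  assumes finK: "finite K" and finC: "finite C" and finZ: "\<And>c. c \<in> K \<Longrightarrow> finite (Z c)"
    and ZC: "\<And>c. c \<in> K \<Longrightarrow> Z c \<inter> C = {}"
    and Zdisj: "\<And>c c'. c \<in> K \<Longrightarrow> c' \<in> K \<Longrightarrow> c \<noteq> c' \<Longrightarrow> Z c \<inter> Z c' = {}"
    and bij: "\<And>c. c \<in> K \<Longrightarrow> bij_betw (\<Phi> c) (Z c \<union> C) (Z c \<union> C)"
begin

definition GI where "GI = Sigma K (\<lambda>c. Z c \<union> C)"
definition GR where "GR = gr GI (\<lambda>(c, x). outn C x) (\<lambda>(c, x). innn C (\<Phi> c x))"
definition NB :: "('a + 'a) set" where "NB = Inl ` C \<union> Inr ` C"
definition NG where "NG = Inl ` NB \<union> Inr ` (\<Union>c\<in>K. Z c)"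
definition BR where "BR = gr (Sigma C (\<lambda>_. K)) (\<lambda>(i, c). Inl i) (\<lambda>(i, c). Inr (ind (\<Phi> c) C i))"
definition Ic where "Ic c = {orb (\<Phi> c) x | x. x \<in> Z c \<and> orb (\<Phi> c) x \<inter> C = {}}"

lemma finY: "c \<in> K \<Longrightarrow> finite (Z c \<union> C)" using finZ finC by blast

lemma into: "c \<in> K \<Longrightarrow> y \<in> Z c \<union> C \<Longrightarrow> \<Phi> c y \<in> Z c \<union> C"
  using bij bij_betwE by blast

lemma pow_in: "c \<in> K \<Longrightarrow> y \<in> Z c \<union> C \<Longrightarrow> (\<Phi> c ^^ n) y \<in> Z c \<union> C"
  using funpow_in_set[of "Z c \<union> C" "\<Phi> c" y n] into by blast

lemma orb_in: "c \<in> K \<Longrightarrow> y \<in> Z c \<union> C \<Longrightarrow> orb (\<Phi> c) y \<subseteq> Z c \<union> C"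
  using pow_in unfolding orb_def by blast

lemma edge: "c \<in> K \<Longrightarrow> x \<in> Z c \<union> C \<Longrightarrow> (outn C x, innn C (\<Phi> c x)) \<in> GR"
  unfolding GR_def using gr_edge[of "(c, x)" GI "\<lambda>(c, x). outn C x" "\<lambda>(c, x). innn C (\<Phi> c x)"]
  by (simp add: GI_def)

lemma GR_cases:
  assumes "(a, b) \<in> GR"
  obtains c x where "c \<in> K" "x \<in> Z c \<union> C" "a = outn C x" "b = innn C (\<Phi> c x)"
    | c x where "c \<in> K" "x \<in> Z c \<union> C" "b = outn C x" "a = innn C (\<Phi> c x)"
  using assms unfolding GR_def GI_def by (auto elim!: gr_cases)

lemma symGR: "sym GR" unfolding GR_def by (rule sym_gr)
lemma symBR: "sym BR" unfolding BR_def by (rule sym_gr)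

lemma colour_unique: "c \<in> K \<Longrightarrow> c' \<in> K \<Longrightarrow> x \<in> Z c \<Longrightarrow> x \<in> Z c' \<Longrightarrow> c = c'"
  using Zdisj by blast

lemma path:
  assumes c: "c \<in> K" and x: "x \<in> Z c \<union> C" and ex: "\<exists>k>0. (\<Phi> c ^^ k) x \<in> C"
  shows "0 < j \<Longrightarrow> j \<le> ret (\<Phi> c) C x \<Longrightarrow> (outn C x, innn C ((\<Phi> c ^^ j) x)) \<in> GR\<^sup>*"
proof (induction j)
  case 0 then show ?case by simp
next
  case (Suc j)
  show ?case
  proof (cases "j = 0")
    case True then show ?thesis using edge[OF c x] by simp
  next
    case False
    have IH: "(outn C x, innn C ((\<Phi> c ^^ j) x)) \<in> GR\<^sup>*" using Suc False by simp
    have nC: "(\<Phi> c ^^ j) x \<notin> C" using ret_props(3)[OF ex, of j] False Suc(3) by simp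
    then have eq: "innn C ((\<Phi> c ^^ j) x) = outn C ((\<Phi> c ^^ j) x)" by (simp add: innn_def outn_def)
    have "(outn C ((\<Phi> c ^^ j) x), innn C (\<Phi> c ((\<Phi> c ^^ j) x))) \<in> GR"
      using edge[OF c pow_in[OF c x]] .
    then have "(innn C ((\<Phi> c ^^ j) x), innn C ((\<Phi> c ^^ Suc j) x)) \<in> GR" using eq by simp
    with IH show ?thesis by (rule rtrancl_into_rtrancl)
  qed
qed

lemma path_ind:
  assumes c: "c \<in> K" and x: "x \<in> Z c \<union> C" and ex: "\<exists>k>0. (\<Phi> c ^^ k) x \<in> C"
  shows "(outn C x, Inl (Inr (ind (\<Phi> c) C x))) \<in> GR\<^sup>*"
proof -
  have "(outn C x, innn C ((\<Phi> c ^^ ret (\<Phi> c) C x) x)) \<in> GR\<^sup>*"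
    using path[OF assms] ret_props(1)[OF ex] by simp
  moreover have "ind (\<Phi> c) C x \<in> C" using ind_in[OF ex] .
  ultimately show ?thesis by (simp add: ind_ret innn_def)
qed

lemma exC: "c \<in> K \<Longrightarrow> i \<in> C \<Longrightarrow> \<exists>k>0. (\<Phi> c ^^ k) i \<in> C"
  using ret_exists[OF bij finY, of c i C] by blast

lemma BR_to_GR:
  assumes "(u, w) \<in> BR\<^sup>*"
  shows "(Inl u, Inl w) \<in> GR\<^sup>*"
proof (rule rtr_map[OF _ assms])
  fix a b assume "(a, b) \<in> BR"
  then obtain i c where ic: "i \<in> C" "c \<in> K" and
    ab: "(a = Inl i \<and> b = Inr (ind (\<Phi> c) C i)) \<or> (b = Inl i \<and> a = Inr (ind (\<Phi> c) C i))"
    unfolding BR_def by (auto elim!: gr_cases)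
  have p: "(Inl (Inl i), Inl (Inr (ind (\<Phi> c) C i))) \<in> GR\<^sup>*"
    using path_ind[OF ic(2) _ exC[OF ic(2,1)]] ic by (simp add: outn_def)
  then have p': "(Inl (Inr (ind (\<Phi> c) C i)), Inl (Inl i)) \<in> GR\<^sup>*" using rtr_sym[OF symGR] by blast
  show "(Inl a, Inl b) \<in> GR\<^sup>*" using ab p p' by auto
qed

definition col_of :: "'a \<Rightarrow> nat" where "col_of x = (THE c. c \<in> K \<and> x \<in> Z c)"

lemma col_of_eq: "c \<in> K \<Longrightarrow> x \<in> Z c \<Longrightarrow> col_of x = c"
  unfolding col_of_def using colour_unique by blast

lemma ind_one:
  assumes "\<Phi> c x \<in> C" shows "ind (\<Phi> c) C x = \<Phi> c x"
proof -
  have ex: "\<exists>k>0. (\<Phi> c ^^ k) x \<in> C" using assms by (intro exI[of _ 1]) simp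
  have "ret (\<Phi> c) C x \<le> 1" using ret_le[of 1 "\<Phi> c" x C] assms by simp
  then have "ret (\<Phi> c) C x = 1" using ret_props(1)[OF ex] by simp
  then show ?thesis by (simp add: ind_ret)
qed

lemma orb_eqc: "c \<in> K \<Longrightarrow> x \<in> Z c \<union> C \<Longrightarrow> y \<in> orb (\<Phi> c) x \<Longrightarrow> orb (\<Phi> c) y = orb (\<Phi> c) x"
  using orb_eq[OF bij finY] by blast

lemma meets_ex:
  assumes "c \<in> K" "x \<in> Z c" "orb (\<Phi> c) x \<inter> C \<noteq> {}"
  shows "\<exists>k>0. (\<Phi> c ^^ k) x \<in> C"
proof -
  obtain m where m: "(\<Phi> c ^^ m) x \<in> C" using assms(3) unfolding orb_def by auto
  have "x \<notin> C" using ZC assms(1,2) by blast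
  then have "m \<noteq> 0" using m by (cases m) auto
  then show ?thesis using m by blast
qed

definition piN :: "('a + 'a) + 'a \<Rightarrow> ('a + 'a) + 'a" where
  "piN n = (case n of Inl u \<Rightarrow> Inl u
     | Inr x \<Rightarrow> (if orb (\<Phi> (col_of x)) x \<inter> C \<noteq> {} then Inl (Inr (ind (\<Phi> (col_of x)) C x))
                else Inr (SOME y. y \<in> orb (\<Phi> (col_of x)) x)))"

definition BRL :: "((('a + 'a) + 'a) \<times> (('a + 'a) + 'a)) set" where
  "BRL = {(Inl p, Inl q) | p q. (p, q) \<in> BR}"

lemma BRL_edge: "(p, q) \<in> BR \<Longrightarrow> (Inl p, Inl q) \<in> BRL\<^sup>*"
  unfolding BRL_def by blast

lemma symBRL: "sym BRL" using symBR unfolding BRL_def sym_def by blast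

lemma pi_edge1:
  assumes c: "c \<in> K" and x: "x \<in> Z c \<union> C"
  shows "(piN (outn C x), piN (innn C (\<Phi> c x))) \<in> BRL\<^sup>*"
proof -
  let ?y = "\<Phi> c x"
  have yY: "?y \<in> Z c \<union> C" using into[OF c x] .
  have y_orb: "?y \<in> orb (\<Phi> c) x" by (rule orb_step)
  have x_orby: "x \<in> orb (\<Phi> c) ?y" using orb_sym[OF bij[OF c] finY[OF c] x y_orb] .
  have oeq: "orb (\<Phi> c) ?y = orb (\<Phi> c) x" using orb_eqc[OF c x y_orb] .
  show ?thesis
  proof (cases "x \<in> C")
    case xC: True
    have e: "(Inl x, Inr (ind (\<Phi> c) C x)) \<in> BR"
      unfolding BR_def using gr_edge[of "(x, c)" "Sigma C (\<lambda>_. K)" "\<lambda>(i, c). Inl i" "\<lambda>(i, c). Inr (ind (\<Phi> c) C i)"] xC c by simp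
    show ?thesis
    proof (cases "?y \<in> C")
      case True
      then show ?thesis using e ind_one[OF True] xC BRL_edge by (simp add: outn_def innn_def piN_def)
    next
      case False
      then have yZ: "?y \<in> Z c" using yY by blast
      have meet: "orb (\<Phi> c) ?y \<inter> C \<noteq> {}" using x_orby xC by blast
      have "ind (\<Phi> c) C ?y = ind (\<Phi> c) C x" using ind_step[OF exC[OF c xC] False] .
      then show ?thesis using e xC False meet col_of_eq[OF c yZ] BRL_edge by (simp add: outn_def innn_def piN_def)
    qed
  next
    case xnC: False
    then have xZ: "x \<in> Z c" using x by blast
    show ?thesis
    proof (cases "orb (\<Phi> c) x \<inter> C = {}")
      case False
      have ex: "\<exists>k>0. (\<Phi> c ^^ k) x \<in> C" using meets_ex[OF c xZ False] .
      show ?thesis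
      proof (cases "?y \<in> C")
        case True
        then show ?thesis using ind_one[OF True] xnC False col_of_eq[OF c xZ] by (simp add: outn_def innn_def piN_def)
      next
        case yn: False
        then have yZ: "?y \<in> Z c" using yY by blast
        have "ind (\<Phi> c) C ?y = ind (\<Phi> c) C x" using ind_step[OF ex yn] .
        then show ?thesis using xnC yn False oeq col_of_eq[OF c xZ] col_of_eq[OF c yZ]
          by (simp add: outn_def innn_def piN_def)
      qed
    next
      case True
      then have yn: "?y \<notin> C" using y_orb by blast
      then have yZ: "?y \<in> Z c" using yY by blast
      show ?thesis using xnC yn True oeq col_of_eq[OF c xZ] col_of_eq[OF c yZ]
          by (simp add: outn_def innn_def piN_def)
    qed
  qed
qed

lemma pi_edge: "(a, b) \<in> GR \<Longrightarrow> (piN a, piN b) \<in> BRL\<^sup>*"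
proof (erule GR_cases)
  fix c x assume "c \<in> K" "x \<in> Z c \<union> C" "a = outn C x" "b = innn C (\<Phi> c x)"
  then show ?thesis using pi_edge1 by simp
next
  fix c x assume "c \<in> K" "x \<in> Z c \<union> C" "b = outn C x" "a = innn C (\<Phi> c x)"
  then show ?thesis using pi_edge1 rtr_sym[OF symBRL] by metis
qed

lemma BRL_unwrap:
  assumes "(Inl p, b) \<in> BRL\<^sup>*" shows "\<exists>q. b = Inl q \<and> (p, q) \<in> BR\<^sup>*"
  using assms
proof (induction rule: rtrancl_induct)
  case base then show ?case by simp
next
  case (step y z)
  then obtain q where q: "y = Inl q" "(p, q) \<in> BR\<^sup>*" by blast
  from step.hyps(2) obtain q1 q2 where "y = Inl q1" "z = Inl q2" "(q1, q2) \<in> BR" unfolding BRL_def by blast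
  then show ?case using q rtrancl_into_rtrancl[of p q BR q2] by auto
qed

lemma GR_to_BR:
  assumes "(Inl u, Inl w) \<in> GR\<^sup>*" shows "(u, w) \<in> BR\<^sup>*"
proof -
  have "(piN (Inl u), piN (Inl w)) \<in> BRL\<^sup>*" using rtr_map[OF pi_edge assms] .
  then have "(Inl u, Inl w) \<in> BRL\<^sup>*" by (simp add: piN_def)
  then show ?thesis using BRL_unwrap by blast
qed

lemma int_class:
  assumes c: "c \<in> K" and xZ: "x \<in> Z c" and av: "orb (\<Phi> c) x \<inter> C = {}"
  shows "GR\<^sup>* `` {Inr x} = Inr ` orb (\<Phi> c) x"
proof
  let ?O = "orb (\<Phi> c) x"
  have xY: "x \<in> Z c \<union> C" using xZ by blast
  have OY: "?O \<subseteq> Z c \<union> C" using orb_in[OF c xY] .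
  show "Inr ` ?O \<subseteq> GR\<^sup>* `` {Inr x}"
  proof -
    have "(Inr x, Inr ((\<Phi> c ^^ n) x)) \<in> GR\<^sup>*" for n
    proof (induction n)
      case 0 then show ?case by simp
    next
      case (Suc n)
      define z where "z = (\<Phi> c ^^ n) x"
      have zO: "z \<in> ?O" "\<Phi> c z \<in> ?O" unfolding z_def orb_def by (auto intro: exI[of _ "Suc n"])
      then have zn: "z \<notin> C" "\<Phi> c z \<notin> C" using av by auto
      have "(outn C z, innn C (\<Phi> c z)) \<in> GR" using edge[OF c] zO OY by blast
      then have "(Inr z, Inr (\<Phi> c z)) \<in> GR" using zn by (simp add: outn_def innn_def)
      with Suc have "(Inr x, Inr (\<Phi> c z)) \<in> GR\<^sup>*" unfolding z_def by (rule rtrancl_into_rtrancl)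
      then show ?case by (simp add: z_def)
    qed
    then show ?thesis unfolding orb_def by auto
  qed
  show "GR\<^sup>* `` {Inr x} \<subseteq> Inr ` ?O"
  proof
    fix n assume "n \<in> GR\<^sup>* `` {Inr x}"
    then have path: "(Inr x, n) \<in> GR\<^sup>*" by simp
    have closed: "b \<in> Inr ` ?O" if ab: "(a, b) \<in> GR" "a \<in> Inr ` ?O" for a b
    proof (rule GR_cases[OF ab(1)])
      fix c' x' assume h: "c' \<in> K" "x' \<in> Z c' \<union> C" "a = outn C x'" "b = innn C (\<Phi> c' x')"
      obtain z where z: "a = Inr z" "z \<in> ?O" using ab(2) by blast
      have x'nC: "x' \<notin> C" using h(3) z(1) by (auto simp: outn_def)
      then have "z = x'" using h(3) z(1) by (simp add: outn_def)
      then have x'O: "x' \<in> ?O" using z by simp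
      have x'Zc: "x' \<in> Z c" using x'O OY x'nC av by blast
      have "x' \<in> Z c'" using h(2) x'nC by blast
      then have cc': "c' = c" using colour_unique[OF c h(1) x'Zc] by simp
      have "\<Phi> c x' \<in> ?O" using orb_trans[OF x'O orb_step] .
      then have "\<Phi> c x' \<notin> C" using av by blast
      then show ?thesis using h(4) cc' \<open>\<Phi> c x' \<in> ?O\<close> by (simp add: innn_def)
    next
      fix c' x' assume h: "c' \<in> K" "x' \<in> Z c' \<union> C" "b = outn C x'" "a = innn C (\<Phi> c' x')"
      obtain z where z: "a = Inr z" "z \<in> ?O" using ab(2) by blast
      have ynC: "\<Phi> c' x' \<notin> C" using h(4) z(1) by (auto simp: innn_def)
      then have "z = \<Phi> c' x'" using h(4) z(1) by (simp add: innn_def)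
      then have yO: "\<Phi> c' x' \<in> ?O" using z by simp
      have yZc: "\<Phi> c' x' \<in> Z c" using yO OY ynC by blast
      have "\<Phi> c' x' \<in> Z c'" using into[OF h(1,2)] ynC by blast
      then have cc': "c' = c" using colour_unique[OF c h(1) yZc] by simp
      have x'Y: "x' \<in> Z c \<union> C" using h(2) cc' by simp
      have "x' \<in> orb (\<Phi> c) (\<Phi> c x')" using orb_sym[OF bij[OF c] finY[OF c] x'Y orb_step] .
      then have x'O: "x' \<in> ?O" using orb_trans[OF yO[unfolded cc']] by simp
      then have "x' \<notin> C" using av by blast
      then show ?thesis using h(3) x'O by (simp add: outn_def)
    qed
    have "x \<in> ?O" by (rule orb_self)
    then have "Inr x \<in> Inr ` ?O" by blast
    then show "n \<in> Inr ` ?O" using rtr_closed[where R=GR and T="Inr ` ?O"] closed path by metis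
  qed
qed

lemma outn_NG: "c \<in> K \<Longrightarrow> x \<in> Z c \<union> C \<Longrightarrow> outn C x \<in> NG"
  unfolding outn_def NG_def NB_def by auto

lemma innn_NG: "c \<in> K \<Longrightarrow> x \<in> Z c \<union> C \<Longrightarrow> innn C x \<in> NG"
  unfolding innn_def NG_def NB_def by auto

lemma GR_NG: "(a, b) \<in> GR \<Longrightarrow> a \<in> NG \<Longrightarrow> b \<in> NG"
proof (erule GR_cases)
  fix c x assume "c \<in> K" "x \<in> Z c \<union> C" "a = outn C x" "b = innn C (\<Phi> c x)"
  then show ?thesis using innn_NG into by blast
next
  fix c x assume "c \<in> K" "x \<in> Z c \<union> C" "b = outn C x" "a = innn C (\<Phi> c x)"
  then show ?thesis using outn_NG by blast
qed

lemma cls_NG: "a \<in> NG \<Longrightarrow> (GR\<^sup>* \<inter> NG \<times> NG) `` {a} = GR\<^sup>* `` {a}"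
proof -
  assume a: "a \<in> NG"
  have "b \<in> NG" if "(a, b) \<in> GR\<^sup>*" for b
    using rtr_closed[where R=GR and T=NG] GR_NG that a by metis
  then show ?thesis using a by auto
qed

lemma finIc: "c \<in> K \<Longrightarrow> finite (Ic c)"
proof -
  assume c: "c \<in> K"
  have "Ic c \<subseteq> Pow (Z c \<union> C)" unfolding Ic_def using orb_in[OF c] by blast
  then show ?thesis using finY[OF c] finite_Pow_iff finite_subset by metis
qed

theorem sup_count: "cc NG GR = cc NB BR + (\<Sum>c\<in>K. card (Ic c))"
proof -
  define g where "g = GR\<^sup>* \<inter> NG \<times> NG"
  define b where "b = BR\<^sup>* \<inter> NB \<times> NB"
  define QB where "QB = (\<lambda>u. g `` {Inl u}) ` NB"
  define QI :: "(('a + 'a) + 'a) set set" where "QI = (\<Union>c\<in>K. (image Inr) ` Ic c)"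
  have eqg: "equiv NG g" unfolding g_def by (rule equiv_cl[OF symGR])
  have eqb: "equiv NB b" unfolding b_def by (rule equiv_cl[OF symBR])
  have finNB: "finite NB" unfolding NB_def using finC by simp
  have NBNG: "u \<in> NB \<Longrightarrow> Inl u \<in> NG" for u unfolding NG_def by simp
  have q: "NG // g = QB \<union> QI"
  proof
    show "NG // g \<subseteq> QB \<union> QI"
    proof
      fix Q assume "Q \<in> NG // g"
      then obtain n where n: "n \<in> NG" "Q = g `` {n}" by (auto simp: quotient_def)
      show "Q \<in> QB \<union> QI"
      proof (cases n)
        case (Inl u)
        then have "u \<in> NB" using n(1) unfolding NG_def by auto
        then show ?thesis using n Inl unfolding QB_def by auto
      next
        case (Inr x)
        then obtain c where c: "c \<in> K" "x \<in> Z c" using n(1) unfolding NG_def by auto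
        have xnC: "x \<notin> C" using ZC c by blast
        show ?thesis
        proof (cases "orb (\<Phi> c) x \<inter> C = {}")
          case True
          have "Q = Inr ` orb (\<Phi> c) x" using n Inr cls_NG int_class[OF c True] by (simp add: g_def)
          moreover have "orb (\<Phi> c) x \<in> Ic c" unfolding Ic_def using c True by blast
          ultimately show ?thesis unfolding QI_def using c(1) by blast
        next
          case False
          have ex: "\<exists>k>0. (\<Phi> c ^^ k) x \<in> C" using meets_ex[OF c False] .
          have p: "(Inr x, Inl (Inr (ind (\<Phi> c) C x))) \<in> GR\<^sup>*"
            using path_ind[OF c(1) _ ex] c xnC by (simp add: outn_def)
          have iC: "ind (\<Phi> c) C x \<in> C" using ind_in[OF ex] .
          then have iNB: "Inr (ind (\<Phi> c) C x) \<in> NB" unfolding NB_def by simp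
          have "(Inr x, Inl (Inr (ind (\<Phi> c) C x))) \<in> g" using p n(1) Inr NBNG[OF iNB] by (simp add: g_def)
          then have "g `` {Inr x} = g `` {Inl (Inr (ind (\<Phi> c) C x))}" using equiv_class_eq[OF eqg] by blast
          then show ?thesis using n Inr iNB unfolding QB_def by auto
        qed
      qed
    qed
    show "QB \<union> QI \<subseteq> NG // g"
    proof
      fix Q assume "Q \<in> QB \<union> QI"
      then show "Q \<in> NG // g"
      proof
        assume "Q \<in> QB"
        then show ?thesis unfolding QB_def using NBNG by (auto intro: quotientI)
      next
        assume "Q \<in> QI"
        then obtain c x where c: "c \<in> K" "x \<in> Z c" "orb (\<Phi> c) x \<inter> C = {}" "Q = Inr ` orb (\<Phi> c) x"
          unfolding QI_def Ic_def by blast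
        have xNG: "Inr x \<in> NG" unfolding NG_def using c by blast
        have "Q = g `` {Inr x}" using c int_class[OF c(1-3)] cls_NG[OF xNG] by (simp add: g_def)
        then show ?thesis using xNG by (auto intro: quotientI)
      qed
    qed
  qed
  have disj: "QB \<inter> QI = {}"
  proof -
    have "Q \<notin> QI" if QBm: "Q \<in> QB" for Q
    proof
      assume QI: "Q \<in> QI"
      obtain u where u: "u \<in> NB" "Q = g `` {Inl u}" using QBm unfolding QB_def by auto
      have "Inl u \<in> Q" using u NBNG unfolding g_def by auto
      moreover have "Q \<subseteq> range Inr" using QI unfolding QI_def by auto
      ultimately show False by auto
    qed
    then show ?thesis by blast
  qed
  define F where "F Q = g `` (Inl ` Q)" for Q
  have Fcls: "F (b `` {u}) = g `` {Inl u}" if u: "u \<in> NB" for u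
  proof
    show "g `` {Inl u} \<subseteq> F (b `` {u})" unfolding F_def b_def using u by auto
    show "F (b `` {u}) \<subseteq> g `` {Inl u}"
    proof
      fix z assume "z \<in> F (b `` {u})"
      then obtain w where w: "(u, w) \<in> BR\<^sup>*" "w \<in> NB" "(Inl w, z) \<in> GR\<^sup>*" "z \<in> NG"
        unfolding F_def b_def g_def by auto
      have "(Inl u, Inl w) \<in> GR\<^sup>*" using BR_to_GR[OF w(1)] .
      then have "(Inl u, z) \<in> GR\<^sup>*" using w(3) by (rule rtrancl_trans)
      then show "z \<in> g `` {Inl u}" using w(4) NBNG[OF u] unfolding g_def by auto
    qed
  qed
  have FQB: "F ` (NB // b) = QB"
  proof
    show "F ` (NB // b) \<subseteq> QB" using Fcls unfolding QB_def by (auto simp: quotient_def)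
    show "QB \<subseteq> F ` (NB // b)"
    proof
      fix Q assume "Q \<in> QB"
      then obtain u where u: "u \<in> NB" "Q = g `` {Inl u}" unfolding QB_def by auto
      then have "Q = F (b `` {u})" using Fcls by simp
      then show "Q \<in> F ` (NB // b)" using u(1) by (auto simp: quotient_def)
    qed
  qed
  have Finj: "inj_on F (NB // b)"
  proof (rule inj_onI)
    fix P Q assume P: "P \<in> NB // b" and Q: "Q \<in> NB // b" and FPQ: "F P = F Q"
    obtain u where u: "u \<in> NB" "P = b `` {u}" using P by (auto simp: quotient_def)
    obtain w where w: "w \<in> NB" "Q = b `` {w}" using Q by (auto simp: quotient_def)
    have "g `` {Inl u} = g `` {Inl w}" using FPQ u w Fcls by simp
    moreover have "Inl w \<in> g `` {Inl w}" using w NBNG unfolding g_def by auto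
    ultimately have "(Inl u, Inl w) \<in> GR\<^sup>*" unfolding g_def by auto
    then have "(u, w) \<in> BR\<^sup>*" by (rule GR_to_BR)
    then have "(u, w) \<in> b" using u w unfolding b_def by simp
    then show "P = Q" using u w equiv_class_eq[OF eqb] by simp
  qed
  have cQB: "card QB = card (NB // b)" using card_image[OF Finj] FQB by simp
  have finQB: "finite QB" unfolding QB_def using finNB by simp
  have injI: "inj_on (image Inr :: 'a set \<Rightarrow> (('a + 'a) + 'a) set) (Ic c)" for c
    by (rule inj_onI) (simp add: inj_image_eq_iff)
  have cQI: "card QI = (\<Sum>c\<in>K. card (Ic c))"
  proof -
    have p1: "\<forall>c\<in>K. finite ((image Inr) ` Ic c :: (('a + 'a) + 'a) set set)" using finIc by blast
    have p2: "\<forall>c\<in>K. \<forall>c'\<in>K. c \<noteq> c' \<longrightarrow> ((image Inr) ` Ic c :: (('a + 'a) + 'a) set set) \<inter> (image Inr) ` Ic c' = {}"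
      proof (intro ballI impI)
        fix c c' assume cc: "c \<in> K" "c' \<in> K" "c \<noteq> c'"
        show "((image Inr) ` Ic c :: (('a + 'a) + 'a) set set) \<inter> (image Inr) ` Ic c' = {}"
        proof (rule ccontr)
          assume "((image Inr) ` Ic c :: (('a + 'a) + 'a) set set) \<inter> (image Inr) ` Ic c' \<noteq> {}"
          then obtain Q1 Q2 where OO: "Q1 \<in> Ic c" "Q2 \<in> Ic c'" "(Inr ` Q1 :: (('a + 'a) + 'a) set) = Inr ` Q2" by blast
          then have "Q1 = Q2" by (simp add: inj_image_eq_iff)
          obtain x where x: "x \<in> Z c" "Q1 = orb (\<Phi> c) x" "orb (\<Phi> c) x \<inter> C = {}" using OO(1) unfolding Ic_def by blast
          obtain x' where x': "x' \<in> Z c'" "Q2 = orb (\<Phi> c') x'" "orb (\<Phi> c') x' \<inter> C = {}" using OO(2) unfolding Ic_def by blast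
          have "x \<in> Q1" using x orb_self by metis
          then have "x \<in> Q2" using \<open>Q1 = Q2\<close> by simp
          then have "x \<in> Z c' \<union> C" using orb_in[OF cc(2)] x' by blast
          then have "x \<in> Z c'" using x(1) ZC[OF cc(1)] by blast
          then show False using Zdisj[OF cc] x(1) by blast
        qed
      qed
    have "card QI = (\<Sum>c\<in>K. card ((image Inr) ` Ic c :: (('a + 'a) + 'a) set set))"
      unfolding QI_def using card_UN_disjoint[OF finK p1 p2] .
    also have "\<dots> = (\<Sum>c\<in>K. card (Ic c))" using card_image[OF injI] by simp
    finally show ?thesis .
  qed
  have finQI: "finite QI" unfolding QI_def using finK finIc by blast
  have "card (NG // g) = card QB + card QI" using q disj finQB finQI card_Un_disjoint by metis
  then show ?thesis unfolding cc_def using cQB cQI by (simp add: g_def b_def)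
qed

definition tlE :: "nat \<times> 'a \<Rightarrow> ('a + 'a) + 'a" where "tlE e = outn C (snd e)"
definition hdE :: "nat \<times> 'a \<Rightarrow> ('a + 'a) + 'a" where "hdE e = innn C (\<Phi> (fst e) (snd e))"

lemma GR_alt: "GR = gr GI tlE hdE"
proof -
  have "(\<lambda>(c, x). outn C x) = tlE" "(\<lambda>(c, x). innn C (\<Phi> c x)) = hdE"
    by (auto simp: tlE_def hdE_def fun_eq_iff)
  then show ?thesis unfolding GR_def by simp
qed

lemma finGI: "finite GI" unfolding GI_def using finK finY by blast

lemma card_tails:
  "card {e \<in> GI. tlE e \<in> T} = card K * card {i \<in> C. Inl (Inl i) \<in> T} + (\<Sum>c\<in>K. card {x \<in> Z c. Inr x \<in> T})"
proof -
  have "{e \<in> GI. tlE e \<in> T} = Sigma K (\<lambda>c. {x \<in> Z c \<union> C. outn C x \<in> T})"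
    unfolding GI_def tlE_def by auto
  then have "card {e \<in> GI. tlE e \<in> T} = (\<Sum>c\<in>K. card {x \<in> Z c \<union> C. outn C x \<in> T})"
    using card_SigmaI finK finY by simp
  also have "\<dots> = (\<Sum>c\<in>K. card {i \<in> C. Inl (Inl i) \<in> T} + card {x \<in> Z c. Inr x \<in> T})"
  proof (rule sum.cong[OF refl])
    fix c assume c: "c \<in> K"
    have "{x \<in> Z c \<union> C. outn C x \<in> T} = {i \<in> C. Inl (Inl i) \<in> T} \<union> {x \<in> Z c. Inr x \<in> T}"
      using ZC[OF c] by (auto simp: outn_def)
    moreover have "{i \<in> C. Inl (Inl i) \<in> T} \<inter> {x \<in> Z c. Inr x \<in> T} = {}" using ZC[OF c] by auto
    ultimately show "card {x \<in> Z c \<union> C. outn C x \<in> T} = card {i \<in> C. Inl (Inl i) \<in> T} + card {x \<in> Z c. Inr x \<in> T}"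
      using finC finZ[OF c] by (simp add: card_Un_disjoint)
  qed
  also have "\<dots> = card K * card {i \<in> C. Inl (Inl i) \<in> T} + (\<Sum>c\<in>K. card {x \<in> Z c. Inr x \<in> T})"
    by (simp add: sum.distrib)
  finally show ?thesis .
qed

lemma card_heads:
  "card {e \<in> GI. hdE e \<in> T} = card K * card {i \<in> C. Inl (Inr i) \<in> T} + (\<Sum>c\<in>K. card {x \<in> Z c. Inr x \<in> T})"
proof -
  have "{e \<in> GI. hdE e \<in> T} = Sigma K (\<lambda>c. {x \<in> Z c \<union> C. innn C (\<Phi> c x) \<in> T})"
    unfolding GI_def hdE_def by auto
  then have "card {e \<in> GI. hdE e \<in> T} = (\<Sum>c\<in>K. card {x \<in> Z c \<union> C. innn C (\<Phi> c x) \<in> T})"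
    using card_SigmaI finK finY by simp
  also have "\<dots> = (\<Sum>c\<in>K. card {i \<in> C. Inl (Inr i) \<in> T} + card {x \<in> Z c. Inr x \<in> T})"
  proof (rule sum.cong[OF refl])
    fix c assume c: "c \<in> K"
    let ?P = "{x \<in> Z c \<union> C. innn C (\<Phi> c x) \<in> T}" and ?Q = "{y \<in> Z c \<union> C. innn C y \<in> T}"
    have inj: "inj_on (\<Phi> c) ?P" using bij[OF c] unfolding bij_betw_def by (auto intro: inj_on_subset)
    have "\<Phi> c ` ?P = ?Q"
    proof
      show "\<Phi> c ` ?P \<subseteq> ?Q" using into[OF c] by auto
      show "?Q \<subseteq> \<Phi> c ` ?P"
      proof
        fix y assume y: "y \<in> ?Q"
        then obtain x where "x \<in> Z c \<union> C" "\<Phi> c x = y" using bij[OF c] unfolding bij_betw_def by (metis (no_types, lifting) imageE mem_Collect_eq)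
        then show "y \<in> \<Phi> c ` ?P" using y by auto
      qed
    qed
    then have "card ?P = card ?Q" using card_image[OF inj] by simp
    moreover have "?Q = {i \<in> C. Inl (Inr i) \<in> T} \<union> {x \<in> Z c. Inr x \<in> T}"
      using ZC[OF c] by (auto simp: innn_def)
    moreover have "{i \<in> C. Inl (Inr i) \<in> T} \<inter> {x \<in> Z c. Inr x \<in> T} = {}" using ZC[OF c] by auto
    ultimately show "card ?P = card {i \<in> C. Inl (Inr i) \<in> T} + card {x \<in> Z c. Inr x \<in> T}"
      using finC finZ[OF c] by (simp add: card_Un_disjoint)
  qed
  also have "\<dots> = card K * card {i \<in> C. Inl (Inr i) \<in> T} + (\<Sum>c\<in>K. card {x \<in> Z c. Inr x \<in> T})"
    by (simp add: sum.distrib)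
  finally show ?thesis .
qed

lemma balance:
  assumes J: "J \<subseteq> GI" and closed: "\<And>e. e \<in> GI - J \<Longrightarrow> tlE e \<in> T \<longleftrightarrow> hdE e \<in> T"
  shows "int (card {e \<in> J. tlE e \<in> T}) - int (card {e \<in> J. hdE e \<in> T})
       = int (card K) * (int (card {i \<in> C. Inl (Inl i) \<in> T}) - int (card {i \<in> C. Inl (Inr i) \<in> T}))"
proof -
  have finJ: "finite J" using J finGI finite_subset by blast
  have finR: "finite (GI - J)" using finGI by simp
  have t: "card {e \<in> GI. tlE e \<in> T} = card {e \<in> GI - J. tlE e \<in> T} + card {e \<in> J. tlE e \<in> T}"
  proof -
    have "{e \<in> GI. tlE e \<in> T} = {e \<in> GI - J. tlE e \<in> T} \<union> {e \<in> J. tlE e \<in> T}" using J by auto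
    then show ?thesis using finJ finR by (simp add: card_Un_disjoint disjoint_iff)
  qed
  have h: "card {e \<in> GI. hdE e \<in> T} = card {e \<in> GI - J. hdE e \<in> T} + card {e \<in> J. hdE e \<in> T}"
  proof -
    have "{e \<in> GI. hdE e \<in> T} = {e \<in> GI - J. hdE e \<in> T} \<union> {e \<in> J. hdE e \<in> T}" using J by auto
    then show ?thesis using finJ finR by (simp add: card_Un_disjoint disjoint_iff)
  qed
  have eq: "{e \<in> GI - J. tlE e \<in> T} = {e \<in> GI - J. hdE e \<in> T}" using closed by blast
  define A where "A = card {i \<in> C. Inl (Inl i) \<in> T}"
  define B where "B = card {i \<in> C. Inl (Inr i) \<in> T}"
  define S where "S = (\<Sum>c\<in>K. card {x \<in> Z c. Inr x \<in> T})"
  define r where "r = card {e \<in> GI - J. hdE e \<in> T}"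
  define jt where "jt = card {e \<in> J. tlE e \<in> T}"
  define jh where "jh = card {e \<in> J. hdE e \<in> T}"
  have n1: "card K * A + S = jt + r" using t eq card_tails[of T] unfolding A_def S_def jt_def r_def by simp
  have n2: "card K * B + S = jh + r" using h card_heads[of T] unfolding B_def S_def jh_def r_def by simp
  have i1: "int (card K) * int A + int S = int jt + int r" using arg_cong[OF n1, of int] by simp
  have i2: "int (card K) * int B + int S = int jh + int r" using arg_cong[OF n2, of int] by simp
  have "int jt - int jh = int (card K) * (int A - int B)" using i1 i2 by (simp add: algebra_simps)
  then show ?thesis unfolding jt_def jh_def A_def B_def .
qed

end



lemma gr_split: "gr I t h = gr (I - J) t h \<union> gr (I \<inter> J) t h"
  unfolding gr_def by blast

lemma gr_cong: "(\<And>e. e \<in> I \<Longrightarrow> h e = h' e) \<Longrightarrow> gr I t h = gr I t h'"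
  unfolding gr_def by force

lemma gr_single: "gr {e} t h = {(t e, h e), (h e, t e)}"
  unfolding gr_def by blast

lemma gr_class_closed:
  assumes "e \<in> I"
  shows "t e \<in> (gr I t h)\<^sup>* `` {x0} \<longleftrightarrow> h e \<in> (gr I t h)\<^sup>* `` {x0}"
proof -
  have "(t e, h e) \<in> gr I t h" "(h e, t e) \<in> gr I t h" using assms unfolding gr_def by blast+
  then show ?thesis by (meson Image_singleton_iff rtrancl.rtrancl_into_rtrancl)
qed

lemma bij_involution:
  assumes "\<And>x. x \<in> A \<Longrightarrow> f x \<in> A" "\<And>x. x \<in> A \<Longrightarrow> f (f x) = x"
  shows "bij_betw f A A"
proof (rule bij_betw_imageI)
  show "inj_on f A" by (rule inj_onI) (metis assms(2))
  show "f ` A = A"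
  proof
    show "f ` A \<subseteq> A" using assms(1) by blast
    show "A \<subseteq> f ` A"
    proof
      fix x assume "x \<in> A" then have "f (f x) = x" "f x \<in> A" using assms by auto
      then show "x \<in> f ` A" by (metis imageI)
    qed
  qed
qed

locale mctx =
  fixes D :: nat and M :: "('a, 'v) cmap"
  assumes cm: "ciliated_map D M" and D2: "2 \<le> D"
begin

abbreviation "H \<equiv> cm_half M"
abbreviation "C \<equiv> cm_cilia M"
abbreviation "X \<equiv> cm_items M"
abbreviation "vx \<equiv> cm_vx M"
abbreviation "rot \<equiv> cm_rot M"
abbreviation "iv \<equiv> cm_inv M"
abbreviation "col \<equiv> cm_col M"
abbreviation "Vs \<equiv> cm_verts M"

lemma finH: "finite H" and finC: "finite C" and finV: "finite Vs" and HC: "H \<inter> C = {}"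
  and vx_in: "x \<in> X \<Longrightarrow> vx x \<in> Vs"
  and rot_bij: "bij_betw rot X X"
  and same_v: "x \<in> X \<Longrightarrow> y \<in> X \<Longrightarrow> vx x = vx y \<longleftrightarrow> (\<exists>n. (rot ^^ n) x = y)"
  and cil_uniq: "x \<in> C \<Longrightarrow> y \<in> C \<Longrightarrow> vx x = vx y \<Longrightarrow> x = y"
  and inv_in: "h \<in> H \<Longrightarrow> iv h \<in> H" and inv_neq: "h \<in> H \<Longrightarrow> iv h \<noteq> h"
  and inv_inv: "h \<in> H \<Longrightarrow> iv (iv h) = h"
  and col_in: "h \<in> H \<Longrightarrow> col h \<in> {1..D}" and col_inv: "h \<in> H \<Longrightarrow> col (iv h) = col h"
  using cm unfolding ciliated_map_def by blast+

lemma finX: "finite X" unfolding cm_items_def using finH finC by simp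

definition Y :: "nat \<Rightarrow> 'a set" where "Y c = half_col M c \<union> C"

lemma Y_sub: "Y c \<subseteq> X" unfolding Y_def half_col_def cm_items_def by auto

lemma rc_ind: "rot_col M c = ind rot (Y c)"
  unfolding rot_col_def ind_def Y_def by (simp add: fun_eq_iff)

lemma rc_bij: "bij_betw (rot_col M c) (Y c) (Y c)"
  unfolding rc_ind using ind_bij[OF rot_bij finX Y_sub] .

lemma vx_rot: "x \<in> X \<Longrightarrow> vx ((rot ^^ n) x) = vx x"
proof -
  assume x: "x \<in> X"
  have into: "\<And>y. y \<in> X \<Longrightarrow> rot y \<in> X" using rot_bij bij_betwE by blast
  have "(rot ^^ n) x \<in> X" using funpow_in_set[OF into x] .
  then show ?thesis using same_v[OF x] by metis
qed

lemma vx_rc: "x \<in> Y c \<Longrightarrow> vx (rot_col M c x) = vx x"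
  unfolding rc_ind ind_def using vx_rot Y_sub by blast

lemma half_col_sub: "half_col M c \<subseteq> H" unfolding half_col_def by auto

lemma col_of_half: "x \<in> half_col M c \<Longrightarrow> col x = c" unfolding half_col_def by auto

definition valid :: "'a set \<Rightarrow> bool" where
  "valid S \<longleftrightarrow> S \<subseteq> H \<and> (\<forall>h \<in> S. iv h \<in> S)"

definition al :: "'a set \<Rightarrow> 'a \<Rightarrow> 'a" where "al S x = (if x \<in> S then iv x else x)"

definition Ph :: "'a set \<Rightarrow> nat \<Rightarrow> 'a \<Rightarrow> 'a" where "Ph S c x = rot_col M c (al S x)"

lemma al_maps: "valid S \<Longrightarrow> x \<in> Y c \<Longrightarrow> al S x \<in> Y c"
  unfolding valid_def al_def Y_def half_col_def using inv_in col_inv HC by auto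

lemma al_invol: "valid S \<Longrightarrow> x \<in> Y c \<Longrightarrow> al S (al S x) = x"
  unfolding valid_def al_def using inv_inv by auto

lemma al_bij: "valid S \<Longrightarrow> bij_betw (al S) (Y c) (Y c)"
  using bij_involution[of "Y c" "al S"] al_maps al_invol by blast

lemma Ph_bij: "valid S \<Longrightarrow> bij_betw (Ph S c) (Y c) (Y c)"
proof -
  assume v: "valid S"
  have "bij_betw (rot_col M c \<circ> al S) (Y c) (Y c)" using bij_betw_trans[OF al_bij[OF v] rc_bij] .
  moreover have "rot_col M c \<circ> al S = Ph S c" by (simp add: Ph_def fun_eq_iff)
  ultimately show ?thesis by simp
qed

lemma sup_inst: "valid S \<Longrightarrow> sup_setup {1..D} C (half_col M) (Ph S)"
proof (unfold_locales)
  fix c assume "valid S" 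
  show "finite (half_col M c)" using finH half_col_sub finite_subset by blast
  show "half_col M c \<inter> C = {}" using HC half_col_sub by blast
  show "bij_betw (Ph S c) (half_col M c \<union> C) (half_col M c \<union> C)" using Ph_bij[OF \<open>valid S\<close>] by (simp add: Y_def)
next
  fix c c' :: nat assume "c \<noteq> c'"
  then show "half_col M c \<inter> half_col M c' = {}" unfolding half_col_def by auto
qed (auto simp: finC)

definition VR :: "'a set \<Rightarrow> ('v \<times> 'v) set" where "VR S = {(vx h, vx (iv h)) | h. h \<in> S}"
definition KV :: "'a set \<Rightarrow> nat" where "KV S = cc Vs (VR S)"
definition GRS where "GRS S = sup_setup.GR {1..D} C (half_col M) (Ph S)"
definition NGc where "NGc = sup_setup.NG {1..D} C (half_col M)"
definition isoS :: int where "isoS = (\<Sum>c=1..D. int (card (isolated_col M c)))"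
definition Psi :: "'a set \<Rightarrow> int" where
  "Psi S = int (card S div 2) + (int D - 2) * int (nV M) + 2 * int (KV S)
           - (int D - 1) * int (nP M) - int (cc NGc (GRS S)) - isoS"

lemma valid_H: "valid H" unfolding valid_def using inv_in by blast

lemma face_step_Ph: "y \<in> Y c \<Longrightarrow> face_step M c y = Ph H c y"
  unfolding face_step_def Ph_def al_def Y_def half_col_def using HC by auto

lemma Y_into: "valid S \<Longrightarrow> y \<in> Y c \<Longrightarrow> Ph S c y \<in> Y c"
  using Ph_bij bij_betwE by blast

lemma final_part:
  shows "int (cc NGc (GRS H)) + isoS = int (bdry_components D M) + int (F_int D M)"
proof -
  interpret I: sup_setup "{1..D}" C "half_col M" "Ph H" by (rule sup_inst[OF valid_H])
  have NB: "I.NB = bdry_verts M" unfolding I.NB_def bdry_verts_def by simp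
  have tgt: "ind (Ph H c) C i = face_target M c i" if "i \<in> C" for c i
  proof -
    have "ind (face_step M c) C i = ind (Ph H c) C i"
      by (rule ind_cong[of "Y c"]) (use that face_step_Ph Y_into[OF valid_H] in \<open>auto simp: Y_def\<close>)
    then show ?thesis unfolding face_target_def ind_def by simp
  qed
  have BR: "I.BR = bdry_adj D M"
    unfolding I.BR_def bdry_adj_def gr_def using tgt by fastforce
  have Ic: "I.Ic c = {face_orbit M c h | h. h \<in> half_col M c \<and> face_orbit M c h \<inter> C = {}}" for c
  proof -
    have "orb (Ph H c) x = face_orbit M c x" if "x \<in> half_col M c" for x
    proof -
      have "(Ph H c ^^ n) x = (face_step M c ^^ n) x" for n
        by (rule funpow_cong_on[of "Y c"]) (use that face_step_Ph Y_into[OF valid_H] in \<open>auto simp: Y_def\<close>)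
      then show ?thesis unfolding orb_def face_orbit_def by simp
    qed
    then show ?thesis unfolding I.Ic_def by (auto; metis)
  qed
  have "cc NGc (GRS H) = bdry_components D M + (\<Sum>c\<in>{1..D}. card (I.Ic c))"
    using I.sup_count unfolding NGc_def GRS_def NB BR bdry_components_def cc_def .
  then have "int (cc NGc (GRS H)) + isoS = int (bdry_components D M) + (\<Sum>c=1..D. int (card (I.Ic c)) + int (card (isolated_col M c)))"
    unfolding isoS_def by (simp add: sum.distrib)
  also have "(\<Sum>c=1..D. int (card (I.Ic c)) + int (card (isolated_col M c))) = int (F_int D M)"
    unfolding F_int_def F_int_col_def Ic by simp
  finally show ?thesis .
qed

lemma cc_connected:
  assumes "N \<noteq> {}" "\<forall>u \<in> N. \<forall>v \<in> N. (u, v) \<in> R\<^sup>*"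
  shows "cc N R = 1"
proof -
  obtain u where u: "u \<in> N" using assms(1) by blast
  have "N // (R\<^sup>* \<inter> N \<times> N) = {N}"
  proof -
    have "(R\<^sup>* \<inter> N \<times> N) `` {x} = N" if "x \<in> N" for x using assms(2) that by auto
    then show ?thesis using u unfolding quotient_def by auto
  qed
  then show ?thesis unfolding cc_def by simp
qed

lemma KV_H: "connected_cmap M \<Longrightarrow> KV H = 1"
proof -
  assume con: "connected_cmap M"
  have "VR H = cmap_edge_rel M" unfolding VR_def cmap_edge_rel_def by simp
  then show ?thesis unfolding KV_def using cc_connected con unfolding connected_cmap_def by metis
qed

lemma cc_empty: "finite N \<Longrightarrow> cc N {} = card N"
proof -
  assume fin: "finite N"
  have "N // ({}\<^sup>* \<inter> N \<times> N) = (\<lambda>x. {x}) ` N" unfolding quotient_def by auto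
  moreover have "inj_on (\<lambda>x. {x}) N" by (rule inj_onI) simp
  ultimately show ?thesis unfolding cc_def by (simp add: card_image)
qed

lemma cc_pairs:
  assumes fin: "finite A"
  shows "cc (Inl ` A \<union> Inr ` A) ({(Inl i, Inr i) | i. i \<in> A} \<union> {(Inr i, Inl i) | i. i \<in> A}) = card A"
proof -
  define R where "R = {(Inl i, Inr i) | i. i \<in> A} \<union> {(Inr i, Inl i) | i. i \<in> A}"
  define N where "N = Inl ` A \<union> Inr ` A"
  have cls: "(R\<^sup>* \<inter> N \<times> N) `` {n} = {Inl i, Inr i}" if i: "i \<in> A" and n: "n = Inl i \<or> n = Inr i" for i n
  proof
    have closed: "\<And>a b. (a, b) \<in> R \<Longrightarrow> a \<in> {Inl i, Inr i} \<Longrightarrow> b \<in> {Inl i, Inr i}" unfolding R_def by auto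
    show "(R\<^sup>* \<inter> N \<times> N) `` {n} \<subseteq> {Inl i, Inr i}"
    proof
      fix z assume "z \<in> (R\<^sup>* \<inter> N \<times> N) `` {n}"
      then have nz: "(n, z) \<in> R\<^sup>*" by auto
      have nT: "n \<in> {Inl i, Inr i}" using n by auto
      show "z \<in> {Inl i, Inr i}" by (rule rtr_closed[where R=R and T="{Inl i, Inr i}", OF closed nz nT])
    qed
    have e1: "(Inl i, Inr i) \<in> R" "(Inr i, Inl i) \<in> R" using i unfolding R_def by auto
    show "{Inl i, Inr i} \<subseteq> (R\<^sup>* \<inter> N \<times> N) `` {n}" using n e1 i unfolding N_def by auto
  qed
  have "N // (R\<^sup>* \<inter> N \<times> N) = (\<lambda>i. {Inl i, Inr i}) ` A"
  proof
    show "N // (R\<^sup>* \<inter> N \<times> N) \<subseteq> (\<lambda>i. {Inl i, Inr i}) ` A"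
    proof
      fix Q assume "Q \<in> N // (R\<^sup>* \<inter> N \<times> N)"
      then obtain n where n: "n \<in> N" "Q = (R\<^sup>* \<inter> N \<times> N) `` {n}" unfolding quotient_def by blast
      then obtain i where i: "i \<in> A" "n = Inl i \<or> n = Inr i" unfolding N_def by blast
      then have "Q = {Inl i, Inr i}" using cls n(2) by simp
      then show "Q \<in> (\<lambda>i. {Inl i, Inr i}) ` A" using i(1) by blast
    qed
    show "(\<lambda>i. {Inl i, Inr i}) ` A \<subseteq> N // (R\<^sup>* \<inter> N \<times> N)"
    proof
      fix Q assume "Q \<in> (\<lambda>i. {Inl i, Inr i}) ` A"
      then obtain i where "i \<in> A" "Q = {Inl i, Inr i}" by auto
      then show "Q \<in> N // (R\<^sup>* \<inter> N \<times> N)" using cls[of i "Inl i"] unfolding quotient_def N_def by auto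
    qed
  qed
  moreover have "inj_on (\<lambda>i. {Inl i, Inr i}) A" by (rule inj_onI) auto
  ultimately show ?thesis unfolding cc_def R_def[symmetric] N_def[symmetric] by (simp add: card_image)
qed

lemma rc_maps: "y \<in> Y c \<Longrightarrow> rot_col M c y \<in> Y c"
  using rc_bij bij_betwE by blast

lemma vx_rc_pow: "x \<in> Y c \<Longrightarrow> vx ((rot_col M c ^^ n) x) = vx x"
proof (induction n)
  case (Suc n)
  have "(rot_col M c ^^ n) x \<in> Y c" using funpow_in_set[OF rc_maps Suc.prems] .
  then show ?case using Suc vx_rc by simp
qed simp

lemma ind_rc_C: "i \<in> C \<Longrightarrow> ind (rot_col M c) C i = i"
proof -
  assume i: "i \<in> C"
  have CY: "C \<subseteq> Y c" unfolding Y_def by blast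
  have finY: "finite (Y c)" using finX Y_sub finite_subset by blast
  have ex: "\<exists>k>0. (rot_col M c ^^ k) i \<in> C" using ret_exists[OF rc_bij finY i CY] .
  have j: "ind (rot_col M c) C i \<in> C" using ind_in[OF ex] .
  have "vx (ind (rot_col M c) C i) = vx i" unfolding ind_def using vx_rc_pow i CY by blast
  then show ?thesis using cil_uniq[OF j i] by simp
qed

lemma Ph_empty: "Ph {} c = rot_col M c" unfolding Ph_def al_def by (simp add: fun_eq_iff)

lemma orb_rot: "x \<in> X \<Longrightarrow> orb rot x = {y \<in> X. vx y = vx x}"
proof -
  assume x: "x \<in> X"
  have into: "\<And>y. y \<in> X \<Longrightarrow> rot y \<in> X" using rot_bij bij_betwE by blast
  show ?thesis
  proof
    show "orb rot x \<subseteq> {y \<in> X. vx y = vx x}"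
      unfolding orb_def using funpow_in_set[OF into x] vx_rot[OF x] by auto
    show "{y \<in> X. vx y = vx x} \<subseteq> orb rot x"
      unfolding orb_def using same_v[OF x] by fastforce
  qed
qed

lemma orb_rc: "x \<in> Y c \<Longrightarrow> orb (rot_col M c) x = {y \<in> Y c. vx y = vx x}"
proof -
  assume x: "x \<in> Y c"
  have "orb (rot_col M c) x = orb rot x \<inter> Y c" unfolding rc_ind using ind_orb[OF rot_bij finX Y_sub x] .
  moreover have "orb rot x = {y \<in> X. vx y = vx x}" using orb_rot Y_sub x by blast
  ultimately show ?thesis using Y_sub by blast
qed

lemma base_count:
  "card (sup_setup.Ic C (half_col M) (Ph {}) c) + card (isolated_col M c) + card C = card Vs"
proof -
  interpret I: sup_setup "{1..D}" C "half_col M" "Ph {}" by (rule sup_inst) (simp add: valid_def)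
  define W1 where "W1 = {v \<in> Vs. (\<exists>h \<in> half_col M c. vx h = v) \<and> \<not> (\<exists>i \<in> C. vx i = v)}"
  define g where "g v = {y \<in> Y c. vx y = v}" for v
  have Ic: "sup_setup.Ic C (half_col M) (Ph {}) c = g ` W1"
  proof
    show "sup_setup.Ic C (half_col M) (Ph {}) c \<subseteq> g ` W1"
    proof
      fix Q assume "Q \<in> sup_setup.Ic C (half_col M) (Ph {}) c"
      then obtain x where x: "x \<in> half_col M c" "Q = orb (rot_col M c) x" "orb (rot_col M c) x \<inter> C = {}"
        unfolding I.Ic_def Ph_empty by blast
      have xY: "x \<in> Y c" using x(1) unfolding Y_def by blast
      have Q: "Q = g (vx x)" using x(2) orb_rc[OF xY] unfolding g_def by simp
      have "\<not> (\<exists>i \<in> C. vx i = vx x)" using x(3) orb_rc[OF xY] unfolding Y_def by auto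
      moreover have "vx x \<in> Vs" using vx_in xY Y_sub by blast
      ultimately have "vx x \<in> W1" unfolding W1_def using x(1) by blast
      then show "Q \<in> g ` W1" using Q by blast
    qed
    show "g ` W1 \<subseteq> sup_setup.Ic C (half_col M) (Ph {}) c"
    proof
      fix Q assume "Q \<in> g ` W1"
      then obtain v h where v: "v \<in> W1" "Q = g v" "h \<in> half_col M c" "vx h = v" unfolding W1_def by blast
      have hY: "h \<in> Y c" using v(3) unfolding Y_def by blast
      have Q: "Q = orb (rot_col M c) h" using orb_rc[OF hY] v unfolding g_def by simp
      have "Q \<inter> C = {}" using v(1,2) unfolding W1_def g_def by auto
      then show "Q \<in> sup_setup.Ic C (half_col M) (Ph {}) c"
        unfolding I.Ic_def Ph_empty using Q v(3) by blast
    qed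
  qed
  have injg: "inj_on g W1"
  proof (rule inj_onI)
    fix u w assume uw: "u \<in> W1" "w \<in> W1" "g u = g w"
    obtain h where h: "h \<in> half_col M c" "vx h = u" using uw(1) unfolding W1_def by blast
    have "h \<in> g u" using h unfolding g_def Y_def by blast
    then have "h \<in> g w" using uw(3) by simp
    then show "u = w" using h unfolding g_def by simp
  qed
  have cI: "card (sup_setup.Ic C (half_col M) (Ph {}) c) = card W1" using Ic card_image[OF injg] by simp
  have cC: "card (vx ` C) = card C" using card_image cil_uniq by (metis inj_onI)
  have part: "Vs = W1 \<union> isolated_col M c \<union> vx ` C"
    unfolding W1_def isolated_col_def using vx_in unfolding cm_items_def by (auto simp: image_iff; metis)
  have d1: "W1 \<inter> isolated_col M c = {}" unfolding W1_def isolated_col_def by auto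
  have d2: "(W1 \<union> isolated_col M c) \<inter> vx ` C = {}" unfolding W1_def isolated_col_def by auto
  have f1: "finite W1" "finite (isolated_col M c)" "finite (vx ` C)"
    unfolding W1_def isolated_col_def using finV finC by auto
  have "card Vs = card W1 + card (isolated_col M c) + card (vx ` C)"
    using part d1 d2 f1 by (simp add: card_Un_disjoint)
  then show ?thesis using cI cC by simp
qed

lemma base_part: "Psi {} = 0"
proof -
  have vE: "valid {}" unfolding valid_def by simp
  interpret I: sup_setup "{1..D}" C "half_col M" "Ph {}" by (rule sup_inst[OF vE])
  have K: "KV {} = card Vs" unfolding KV_def VR_def using cc_empty finV by simp
  have BR: "I.BR = {(Inl i, Inr i) | i. i \<in> C} \<union> {(Inr i, Inl i) | i. i \<in> C}"
    unfolding I.BR_def gr_def Ph_empty using ind_rc_C D2 by force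
  have NB: "I.NB = Inl ` C \<union> Inr ` C" unfolding I.NB_def by simp
  have "cc NGc (GRS {}) = card C + (\<Sum>c\<in>{1..D}. card (I.Ic c))"
    using I.sup_count unfolding NGc_def GRS_def BR NB cc_pairs[OF finC] .
  then have "int (cc NGc (GRS {})) + isoS = int (card C) + (\<Sum>c=1..D. int (card (I.Ic c)) + int (card (isolated_col M c)))"
    unfolding isoS_def by (simp add: sum.distrib)
  also have "(\<Sum>c=1..D. int (card (I.Ic c)) + int (card (isolated_col M c))) = (\<Sum>c=1..D. int (card Vs) - int (card C))"
  proof (rule sum.cong[OF refl])
    fix c show "int (card (I.Ic c)) + int (card (isolated_col M c)) = int (card Vs) - int (card C)"
      using base_count[of c] by linarith
  qed
  also have "\<dots> = int D * (int (card Vs) - int (card C))" by simp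
  finally have "int (cc NGc (GRS {})) + isoS = int (card C) + int D * (int (card Vs) - int (card C))" .
  then show ?thesis unfolding Psi_def nV_def nP_def K by (simp add: algebra_simps)
qed

lemma no_unit:
  fixes k :: int assumes "2 \<le> D" shows "1 \<noteq> int D * k"
proof
  assume e: "1 = int D * k"
  have Dp: "0 < int D" using assms by simp
  have "0 < int D * k" using e by simp
  then have kp: "0 < k" using Dp zero_less_mult_pos by blast
  have "int D * 1 \<le> int D * k" using kp Dp by (intro mult_left_mono) auto
  then show False using e assms by simp
qed

lemma gr_union: "gr (A \<union> B) t h = gr A t h \<union> gr B t h"
  unfolding gr_def by blast

lemma gr_insert: "gr (insert e A) t h = {(t e, h e), (h e, t e)} \<union> gr A t h"
  unfolding gr_def by blast

definition ar :: "('a + 'a) + 'a \<Rightarrow> 'v" where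
  "ar n = (case n of Inl (Inl i) \<Rightarrow> vx i | Inl (Inr i) \<Rightarrow> vx i | Inr x \<Rightarrow> vx x)"

lemma ar_outn: "ar (outn C x) = vx x" unfolding ar_def outn_def by simp
lemma ar_innn: "ar (innn C x) = vx x" unfolding ar_def innn_def by simp

lemma vx_Ph: "valid S \<Longrightarrow> x \<in> Y c \<Longrightarrow> vx (Ph S c x) = vx (al S x)"
  unfolding Ph_def using vx_rc al_maps by blast

lemma sym_VR: "valid S \<Longrightarrow> sym (VR S)"
proof (rule symI)
  assume v: "valid S"
  fix x y assume "(x, y) \<in> VR S"
  then obtain h where h: "h \<in> S" "x = vx h" "y = vx (iv h)" unfolding VR_def by blast
  have "iv h \<in> S" "iv (iv h) = h" using h(1) v inv_inv unfolding valid_def by auto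
  then show "(y, x) \<in> VR S" unfolding VR_def using h by force
qed

lemma ar_edge:
  assumes v: "valid S" and e: "(u, w) \<in> GRS S"
  shows "(ar u, ar w) \<in> (VR S)\<^sup>*"
proof -
  interpret I: sup_setup "{1..D}" C "half_col M" "Ph S" by (rule sup_inst[OF v])
  have one: "(ar (outn C x), ar (innn C (Ph S c x))) \<in> (VR S)\<^sup>*" if "c \<in> {1..D}" "x \<in> half_col M c \<union> C" for c x
  proof -
    have xY: "x \<in> Y c" using that unfolding Y_def by simp
    have "ar (innn C (Ph S c x)) = vx (al S x)" using vx_Ph[OF v xY] ar_innn by simp
    moreover have "(vx x, vx (al S x)) \<in> (VR S)\<^sup>*"
    proof (cases "x \<in> S")
      case True then have "(vx x, vx (al S x)) \<in> VR S" unfolding VR_def al_def by auto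
      then show ?thesis by blast
    next
      case False then show ?thesis unfolding al_def by simp
    qed
    ultimately show ?thesis using ar_outn by simp
  qed
  show ?thesis
  proof (rule I.GR_cases[OF e[unfolded GRS_def]])
    fix c x assume "c \<in> {1..D}" "x \<in> half_col M c \<union> C" "u = outn C x" "w = innn C (Ph S c x)"
    then show ?thesis using one by simp
  next
    fix c x assume "c \<in> {1..D}" "x \<in> half_col M c \<union> C" "w = outn C x" "u = innn C (Ph S c x)"
    then have "(ar w, ar u) \<in> (VR S)\<^sup>*" using one by simp
    then show ?thesis using rtr_sym[OF sym_VR[OF v]] by blast
  qed
qed

lemma ar_path:
  assumes v: "valid S" and sub: "R \<subseteq> GRS S" and p: "(u, w) \<in> R\<^sup>*"
  shows "(ar u, ar w) \<in> (VR S)\<^sup>*"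
proof -
  have "\<And>a b. (a, b) \<in> R \<Longrightarrow> (ar a, ar b) \<in> (VR S)\<^sup>*" using ar_edge[OF v] sub by blast
  then show ?thesis using rtr_map[where F=ar and R=R and S="VR S"] p by blast
qed

lemma step_part:
  assumes v: "valid S" and aS: "a \<in> S"
  shows "Psi (S - {a, iv a}) \<le> Psi S"
proof -
  define b where "b = iv a"
  define c where "c = col a"
  define S' where "S' = S - {a, b}"
  have SH: "S \<subseteq> H" using v unfolding valid_def by simp
  have aH: "a \<in> H" using aS SH by blast
  have bS: "b \<in> S" using v aS unfolding valid_def b_def by blast
  have bH: "b \<in> H" using bS SH by blast
  have ab: "a \<noteq> b" using inv_neq[OF aH] unfolding b_def by simp
  have iva: "iv b = a" using inv_inv[OF aH] unfolding b_def by simp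
  have v': "valid S'"
    unfolding valid_def S'_def
  proof (intro conjI ballI)
    show "S - {a, b} \<subseteq> H" using SH by blast
    fix h assume h: "h \<in> S - {a, b}"
    have hH: "h \<in> H" using h SH by blast
    have "iv h \<in> S" using v h unfolding valid_def by blast
    moreover have "iv h \<noteq> a" using h inv_inv[OF hH] unfolding b_def by auto
    moreover have "iv h \<noteq> b" using h inv_inv[OF hH] iva by auto
    ultimately show "iv h \<in> S - {a, b}" by blast
  qed
  have finS: "finite S" using SH finH finite_subset by blast
  have cardS: "card S = card S' + 2"
  proof -
    have "S = S' \<union> {a, b}" using aS bS unfolding S'_def by blast
    moreover have "S' \<inter> {a, b} = {}" unfolding S'_def by blast
    moreover have "finite S'" using finS unfolding S'_def by simp
    ultimately show ?thesis using ab by (simp add: card_Un_disjoint)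
  qed
  have cK: "c \<in> {1..D}" using col_in[OF aH] unfolding c_def .
  have aZ: "a \<in> half_col M c" using aH unfolding half_col_def c_def by simp
  have bZ: "b \<in> half_col M c" using bH col_inv[OF aH] unfolding half_col_def c_def b_def by simp
  have aC: "a \<notin> C" "b \<notin> C" using aH bH HC by blast+
  have aY: "a \<in> Y c" "b \<in> Y c" using aZ bZ unfolding Y_def by blast+
  interpret I: sup_setup "{1..D}" C "half_col M" "Ph S" by (rule sup_inst[OF v])
  interpret I': sup_setup "{1..D}" C "half_col M" "Ph S'" by (rule sup_inst[OF v'])
  define e1 where "e1 = (c, a)"
  define e2 where "e2 = (c, b)"
  define J where "J = {e1, e2}"
  have JGI: "J \<subseteq> I.GI" unfolding J_def e1_def e2_def I.GI_def using cK aZ bZ by blast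
  have hdagree: "I.hdE e = I'.hdE e" if e: "e \<in> I.GI - J" for e
  proof -
    obtain c' x where e': "e = (c', x)" "c' \<in> {1..D}" "x \<in> half_col M c' \<union> C" using e unfolding I.GI_def by blast
    have "x \<noteq> a \<and> x \<noteq> b"
    proof (rule ccontr)
      assume "\<not> (x \<noteq> a \<and> x \<noteq> b)"
      then have xab: "x = a \<or> x = b" by simp
      then have "x \<in> half_col M c'" using e'(3) aC by blast
      then have "col x = c'" by (rule col_of_half)
      moreover have "col x = c" using xab aZ bZ col_of_half by blast
      ultimately have "e = e1 \<or> e = e2" using xab e'(1) unfolding e1_def e2_def by auto
      then show False using e unfolding J_def by blast
    qed
    then have "x \<notin> S \<or> x \<in> S'" unfolding S'_def by blast
    then have "al S x = al S' x" unfolding al_def S'_def by auto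
    then show ?thesis unfolding I.hdE_def I'.hdE_def e'(1) Ph_def by simp
  qed
  define ha where "ha = innn C (rot_col M c a)"
  define hb where "hb = innn C (rot_col M c b)"
  have tl1: "I.tlE e1 = Inr a" and tl2: "I.tlE e2 = Inr b"
    unfolding I.tlE_def e1_def e2_def outn_def using aC by auto
  have alSa: "al S a = b" "al S b = a" unfolding al_def using aS bS iva b_def by auto
  have alS'a: "al S' a = a" "al S' b = b" unfolding al_def S'_def by auto
  have hd1: "I.hdE e1 = hb" "I.hdE e2 = ha" "I'.hdE e1 = ha" "I'.hdE e2 = hb"
    unfolding I.hdE_def I'.hdE_def e1_def e2_def Ph_def ha_def hb_def using alSa alS'a by auto
  define R0 where "R0 = gr (I.GI - J) I.tlE I'.hdE"
  have R0': "R0 = gr (I.GI - J) I.tlE I.hdE" unfolding R0_def using hdagree gr_cong by metis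
  have GI_split: "I.GI = (I.GI - J) \<union> {e1} \<union> {e2}" using JGI unfolding J_def by blast
  have GRS': "GRS S' = R0 \<union> {(Inr a, ha), (ha, Inr a)} \<union> {(Inr b, hb), (hb, Inr b)}"
  proof -
    have "GRS S' = gr I.GI I.tlE I'.hdE" unfolding GRS_def I'.GR_alt ..
    also have "\<dots> = R0 \<union> gr {e1} I.tlE I'.hdE \<union> gr {e2} I.tlE I'.hdE"
      unfolding R0_def by (subst GI_split) (simp only: gr_union)
    finally show ?thesis using tl1 tl2 hd1 by (simp add: gr_single)
  qed
  have GRS: "GRS S = R0 \<union> {(Inr a, hb), (hb, Inr a)} \<union> {(Inr b, ha), (ha, Inr b)}"
  proof -
    have "GRS S = gr I.GI I.tlE I.hdE" unfolding GRS_def I.GR_alt ..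
    also have "\<dots> = R0 \<union> gr {e1} I.tlE I.hdE \<union> gr {e2} I.tlE I.hdE"
      unfolding R0' by (subst GI_split) (simp only: gr_union)
    finally show ?thesis using tl1 tl2 hd1 by (simp add: gr_single)
  qed
  define R1 where "R1 = R0 \<union> {(Inr b, hb), (hb, Inr b)}"
  have R1gr: "R1 = gr (I.GI - {e1}) I.tlE I'.hdE"
  proof -
    have "I.GI - {e1} = (I.GI - J) \<union> {e2}" using JGI ab unfolding J_def e1_def e2_def by blast
    then show ?thesis unfolding R1_def R0_def using tl2 hd1 by (simp add: gr_insert Un_commute)
  qed
  have symR0: "sym R0" unfolding R0_def by (rule sym_gr)
  have symR1: "sym R1" unfolding R1gr by (rule sym_gr)
  have nodes: "Inr a \<in> NGc" "Inr b \<in> NGc" "ha \<in> NGc" "hb \<in> NGc"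
  proof -
    show "Inr a \<in> NGc" "Inr b \<in> NGc" unfolding NGc_def I.NG_def using aZ bZ cK by blast+
    have "rot_col M c a \<in> Y c" "rot_col M c b \<in> Y c" using rc_maps aY by blast+
    then show "ha \<in> NGc" "hb \<in> NGc" unfolding NGc_def ha_def hb_def
      using I.innn_NG[OF cK] unfolding Y_def by blast+
  qed
  have finNG: "finite NGc" unfolding NGc_def I.NG_def I.NB_def using finC finH half_col_sub
    by (auto intro: finite_subset)
  have K2: "card {1..D} = D" by simp
  have N1: "(Inr a, ha) \<in> R1\<^sup>*"
  proof (rule ccontr)
    assume nc: "(Inr a, ha) \<notin> R1\<^sup>*"
    define T where "T = R1\<^sup>* `` {Inr a}"
    have J1: "{e1} \<subseteq> I'.GI" using JGI unfolding J_def by blast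
    have closed: "I'.tlE e \<in> T \<longleftrightarrow> I'.hdE e \<in> T" if "e \<in> I'.GI - {e1}" for e
      unfolding T_def R1gr using gr_class_closed that by metis
    have bal: "int (card {e \<in> {e1}. I'.tlE e \<in> T}) - int (card {e \<in> {e1}. I'.hdE e \<in> T})
       = int (card {1..D}) * (int (card {i \<in> C. Inl (Inl i) \<in> T}) - int (card {i \<in> C. Inl (Inr i) \<in> T}))"
      by (rule I'.balance[OF J1 closed])
    have c1: "{e \<in> {e1}. I'.tlE e \<in> T} = {e1}" using tl1 unfolding T_def by auto
    have c0: "{e \<in> {e1}. I'.hdE e \<in> T} = {}" using hd1 nc unfolding T_def by auto
    have "1 = int D * (int (card {i \<in> C. Inl (Inl i) \<in> T}) - int (card {i \<in> C. Inl (Inr i) \<in> T}))"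
      using bal[unfolded c1 c0 K2] by simp
    then show False using no_unit[OF D2] by blast
  qed
  have cS': "cc NGc (GRS S') = cc NGc R1"
  proof -
    have "GRS S' = R1 \<union> {(Inr a, ha), (ha, Inr a)}" unfolding GRS' R1_def by blast
    then show ?thesis using cc_add_conn[OF symR1 N1] by simp
  qed
  have VRS: "VR S = VR S' \<union> {(vx a, vx b), (vx b, vx a)}"
  proof -
    have "S = S' \<union> {a, b}" using aS bS unfolding S'_def by blast
    then show ?thesis unfolding VR_def using iva b_def by auto
  qed
  have vV: "vx a \<in> Vs" "vx b \<in> Vs" using vx_in aH bH unfolding cm_items_def by blast+
  have cardS2: "card S div 2 = card S' div 2 + 1" using cardS by simp
  show ?thesis
  proof (cases "(vx a, vx b) \<in> (VR S')\<^sup>*")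
    case True
    have KVeq: "KV S = KV S'" unfolding KV_def VRS using cc_add_conn[OF sym_VR[OF v'] True] by simp
    have m1: "cc NGc (GRS S) \<le> cc NGc R0"
      by (rule cc_mono[OF symR0]) (auto simp: GRS sym_def finNG dest: symD[OF symR0])
    have m2: "cc NGc R0 \<le> cc NGc R1 + 1"
    proof (cases "(Inr b, hb) \<in> R0\<^sup>*")
      case True then show ?thesis unfolding R1_def using cc_add_conn[OF symR0 True] by simp
    next
      case False then show ?thesis unfolding R1_def using cc_add_disc[OF symR0 False nodes(2,4) finNG] by simp
    qed
    show ?thesis unfolding Psi_def S'_def[symmetric] b_def[symmetric] using KVeq m1 m2 cS' cardS2 by simp
  next
    case False
    have KVeq: "KV S' = KV S + 1" unfolding KV_def VRS using cc_add_disc[OF sym_VR[OF v'] False vV finV] by simp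
    have R0sub: "R0 \<subseteq> GRS S'" unfolding GRS' by blast
    have arp: "(vx b, ar n) \<in> (VR S')\<^sup>*" if "(Inr b, n) \<in> R0\<^sup>*" for n
      using ar_path[OF v' R0sub that] by (simp add: ar_def)
    have notab: "(vx b, vx a) \<notin> (VR S')\<^sup>*" using False rtr_sym[OF sym_VR[OF v']] by blast
    have ara: "ar (Inr a) = vx a" "ar ha = vx a" "ar hb = vx b"
      unfolding ha_def hb_def using ar_innn vx_rc aY by (auto simp: ar_def)
    have N2: "(Inr b, hb) \<in> R0\<^sup>*"
    proof (rule ccontr)
      assume nc: "(Inr b, hb) \<notin> R0\<^sup>*"
      define T where "T = R0\<^sup>* `` {Inr b}"
      have J': "J \<subseteq> I'.GI" using JGI by blast
      have closed: "I'.tlE e \<in> T \<longleftrightarrow> I'.hdE e \<in> T" if "e \<in> I'.GI - J" for e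
        unfolding T_def R0_def using gr_class_closed that by metis
      have bal: "int (card {e \<in> J. I'.tlE e \<in> T}) - int (card {e \<in> J. I'.hdE e \<in> T})
         = int (card {1..D}) * (int (card {i \<in> C. Inl (Inl i) \<in> T}) - int (card {i \<in> C. Inl (Inr i) \<in> T}))"
        by (rule I'.balance[OF J' closed])
      have aT: "Inr a \<notin> T"
      proof
        assume "Inr a \<in> T"
        then have "(Inr b, Inr a) \<in> R0\<^sup>*" unfolding T_def by simp
        then have "(vx b, ar (Inr a)) \<in> (VR S')\<^sup>*" by (rule arp)
        then show False using ara(1) notab by simp
      qed
      have haT: "ha \<notin> T"
      proof
        assume "ha \<in> T"
        then have "(Inr b, ha) \<in> R0\<^sup>*" unfolding T_def by simp
        then have "(vx b, ar ha) \<in> (VR S')\<^sup>*" by (rule arp)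
        then show False using ara(2) notab by simp
      qed
      have bT: "Inr b \<in> T" unfolding T_def by simp
      have e12: "e1 \<noteq> e2" using ab unfolding e1_def e2_def by simp
      have c1: "{e \<in> J. I'.tlE e \<in> T} = {e2}" using tl1 tl2 aT bT e12 unfolding J_def by auto
      have c0: "{e \<in> J. I'.hdE e \<in> T} = {}" using hd1 nc haT unfolding J_def T_def by auto
      have "1 = int D * (int (card {i \<in> C. Inl (Inl i) \<in> T}) - int (card {i \<in> C. Inl (Inr i) \<in> T}))"
        using bal[unfolded c1 c0 K2] by simp
      then show False using no_unit[OF D2] by blast
    qed
    have c10: "cc NGc R1 = cc NGc R0" unfolding R1_def using cc_add_conn[OF symR0 N2] .
    have N3: "(Inr a, hb) \<notin> R0\<^sup>*"
    proof
      assume "(Inr a, hb) \<in> R0\<^sup>*"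
      then have "(hb, Inr a) \<in> R0\<^sup>*" using rtr_sym[OF symR0] by blast
      then have "(Inr b, Inr a) \<in> R0\<^sup>*" using N2 rtrancl_trans by metis
      then have "(vx b, ar (Inr a)) \<in> (VR S')\<^sup>*" by (rule arp)
      then show False using ara(1) notab by simp
    qed
    define R2 where "R2 = R0 \<union> {(Inr a, hb), (hb, Inr a)}"
    have c02: "cc NGc R0 = cc NGc R2 + 1" unfolding R2_def using cc_add_disc[OF symR0 N3 nodes(1,4) finNG] .
    have symR2: "sym R2" using symR0 unfolding R2_def sym_def by blast
    have m: "cc NGc (GRS S) \<le> cc NGc R2"
      by (rule cc_mono[OF symR2]) (auto simp: GRS R2_def sym_def finNG dest: symD[OF symR0])
    show ?thesis unfolding Psi_def S'_def[symmetric] b_def[symmetric] using KVeq m c02 c10 cS' cardS2 by simp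
  qed
qed

lemma valid_remove:
  assumes v: "valid S" and aS: "a \<in> S"
  shows "valid (S - {a, iv a})"
  unfolding valid_def
proof (intro conjI ballI)
  have SH: "S \<subseteq> H" using v unfolding valid_def by simp
  then show "S - {a, iv a} \<subseteq> H" by blast
  fix h assume h: "h \<in> S - {a, iv a}"
  have hH: "h \<in> H" using h SH by blast
  have aH: "a \<in> H" using aS SH by blast
  have "iv h \<in> S" using v h unfolding valid_def by blast
  moreover have "iv h \<noteq> a" using h inv_inv[OF hH] by auto
  moreover have "iv h \<noteq> iv a"
  proof
    assume "iv h = iv a"
    then have "iv (iv h) = iv (iv a)" by simp
    then have "h = a" using inv_inv[OF hH] inv_inv[OF aH] by simp
    then show False using h by simp
  qed
  ultimately show "iv h \<in> S - {a, iv a}" by blast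
qed

lemma psi_nonneg: "valid S \<Longrightarrow> 0 \<le> Psi S"
proof (induction "card S" arbitrary: S rule: less_induct)
  case less
  show ?case
  proof (cases "S = {}")
    case True then show ?thesis using base_part by simp
  next
    case False
    then obtain a where aS: "a \<in> S" by blast
    have v': "valid (S - {a, iv a})" using valid_remove[OF less.prems aS] .
    have finS: "finite S" using less.prems finH finite_subset unfolding valid_def by blast
    have "S - {a, iv a} \<subset> S" using aS by blast
    then have "card (S - {a, iv a}) < card S" using finS by (rule psubset_card_mono[rotated])
    then have "0 \<le> Psi (S - {a, iv a})" using less.hyps v' by blast
    also have "\<dots> \<le> Psi S" using step_part[OF less.prems aS] .
    finally show ?thesis .
  qed
qed

theorem main_ineq:
  assumes con: "connected_cmap M"
  shows "- (int D - 1) * int (nE M) + int (F_int D M)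
         \<le> int D - (int D - 1) * int (nP M) - int (bdry_components D M)
            - (int D - 2) * (int (nE M) - int (nV M) + 1)"
proof -
  have p: "0 \<le> Psi H" using psi_nonneg[OF valid_H] .
  have f: "int (cc NGc (GRS H)) + isoS = int (bdry_components D M) + int (F_int D M)" using final_part .
  have k: "KV H = 1" using KV_H[OF con] .
  have e: "card H div 2 = nE M" unfolding nE_def ..
  have "int D - (int D - 1) * int (nP M) - int (bdry_components D M)
            - (int D - 2) * (int (nE M) - int (nV M) + 1) - (- (int D - 1) * int (nE M) + int (F_int D M))
        = Psi H"
    unfolding Psi_def k e using f by (simp add: algebra_simps)
  then show ?thesis using p by linarith
qed

end

theorem lemma1:
  fixes D :: nat and M :: "('a, 'v) cmap"
  assumes "D \<ge> 3" and "ciliated_map D M" and "connected_cmap M"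
  shows "- (int D - 1) * int (nE M) + int (F_int D M)
         \<le> int D - (int D - 1) * int (nP M) - int (bdry_components D M)
            - (int D - 2) * (int (nE M) - int (nV M) + 1)"
proof -
  interpret mctx D M using assms(1,2) by unfold_locales auto
  show ?thesis using main_ineq[OF assms(3)] .
qed


end
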